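(* For every integer $n\ge1$, the 2-dimensional substitution $\omega'_n:\Omega'_n\to\Omega'_n$ satisfies $\Omega_n\subseteq\overline{\omega'_n(\Omega'_n)}^{\sigma}:=\{\sigma^{\mathbf k}\omega'_n(x)\mid\mathbf k\in\mathbb Z^2,\ x\in\Omega'_n\}$.
   Context: Write $\bar m=m+1$. $V_n=\{(v_0,v_1,v_2)\in\mathbb{Z}^3: 0\le v_0\le v_1\le 1,\ v_1\le v_2\le n+1\}$, elements written as words $v_0v_1v_2$. A Wang tile is $t=(a,b,c,d)$ with $\mathrm{RIGHT}(t)=a$, $\mathrm{TOP}(t)=b$, $\mathrm{LEFT}(t)=c$, $\mathrm{BOTTOM}(t)=d$; $\hat t=(b,a,d,c)$, $\hat S=\{\hat t:t\in S\}$. Define (as (right, top, left, bottom)): $W_n=\{(11(i+1),11(j+1),11i,11j):1\le i,j\le n\}$; $b_n^i=(00(i+1),111,00i,11n)$, $B'_n=\{b_n^i:0\le i\le n\}$, $B_n=\{b_n^i:0\le i\le n-1\}$; $G_n=\{(01(i+1),111,00i,11(n+1)):0\le i\le n\}$; $Y_n=\{(01(i+1),112,01i,11(n+1)):1\le i\le n\}$; $A_n=\{(00(i+1),112,01i,11n):1\le i\le n\}$; $j_n^{k,l,r,s}=((0,k,l),(0,r,s),(0,s,r+n),(0,l,k+n))$ for $(k,l),(r,s)\in\{(0,0),(0,1),(1,1)\}$; $J'_n$ is the set of these 9 tiles and $J_n=J'_n\setminus\{j_n^{0,0,1,1},j_n^{1,1,0,0}\}$. $\mathcal T'_n=W_n\cup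 B'_n\cup G_n\cup Y_n\cup A_n\cup\hat B'_n\cup\hat G_n\cup\hat Y_n\cup\hat A_n\cup J'_n$ and $\mathcal T_n=W_n\cup B_n\cup G_n\cup Y_n\cup\hat B_n\cup\hat G_n\cup\hat Y_n\cup J_n$. $\Omega'_n$ (resp. $\Omega_n$) is the set of configurations $x:\mathbb Z^2\to\mathcal T'_n$ (resp. $\mathcal T_n$) with $\mathrm{RIGHT}(x(\mathbf m))=\mathrm{LEFT}(x(\mathbf m+\mathbf e_1))$ and $\mathrm{TOP}(x(\mathbf m))=\mathrm{BOTTOM}(x(\mathbf m+\mathbf e_2))$; $(\sigma^{\mathbf k}x)_{\mathbf m}=x_{\mathbf m+\mathbf k}$. Labels of a valid rectangular pattern: bottom/top labels read left to right along bottom/top row, left/right labels read bottom to top along left/right column. $\tau_n:V_n\to V_n^*$ is $\tau_n(xyz)=(0,x-y+1,n)\cdot(11n)^{z-x-1}\cdot(11\bar n)^{n+1-z}$ if $x\ne z$, and $\tau_n(xyz)=(0,x-y+1,n+1)\cdot(11\bar n)^{n-z}$ if $x=z$. For $t=(\alpha,\beta,u,v)\in\mathcal T'_n$, $\omega'_n(t)$ is the unique valid rectangular pattern over $\mathcal T'_n$ with right, top, left, bottom labels $\tau_n(\alpha),\tau_n(\beta),\tau_n(u),\tau_n(v)$. For $x\in\Omega'_n$, $\omega'_n(x)$ is the configuration obtained by concatenating the patterns $\omega'_n(x_{\mathbf m})$ according to the positions $\mathbf m$, with the lower-left cell of $\omega'_n(x_{\mathbf 0})$ at the origin; it lies in $\Omega'_n$.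 *)

theory Defs
  imports Main
begin

text \<open>A colour is a word v0 v1 v2, represented as a triple of integers.
  A Wang tile is (right, top, left, bottom).\<close>

type_synonym color = "int \<times> int \<times> int"
type_synonym tile = "color \<times> color \<times> color \<times> color"

definition RIGHT :: "tile \<Rightarrow> color" where "RIGHT t = fst t"
definition TOP :: "tile \<Rightarrow> color" where "TOP t = fst (snd t)"
definition LEFT :: "tile \<Rightarrow> color" where "LEFT t = fst (snd (snd t))"
definition BOTTOM :: "tile \<Rightarrow> color" where "BOTTOM t = snd (snd (snd t))"

definition hat :: "tile \<Rightarrow> tile" where
  "hat t = (case t of (a, b, c, d) \<Rightarrow> (b, a, d, c))"

definition Wset :: "nat \<Rightarrow> tile set" where
  "Wset n = {((1,1,i+1),(1,1,j+1),(1,1,i),(1,1,j)) | i j. 1 \<le> i \<and> i \<le> int n \<and> 1 \<le> j \<and> j \<le> int n}"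

definition btile :: "nat \<Rightarrow> int \<Rightarrow> tile" where
  "btile n i = ((0,0,i+1),(1,1,1),(0,0,i),(1,1,int n))"

definition B'set :: "nat \<Rightarrow> tile set" where
  "B'set n = {btile n i | i. 0 \<le> i \<and> i \<le> int n}"

definition Bset :: "nat \<Rightarrow> tile set" where
  "Bset n = {btile n i | i. 0 \<le> i \<and> i \<le> int n - 1}"

definition Gset :: "nat \<Rightarrow> tile set" where
  "Gset n = {((0,1,i+1),(1,1,1),(0,0,i),(1,1,int n + 1)) | i. 0 \<le> i \<and> i \<le> int n}"

definition Yset :: "nat \<Rightarrow> tile set" where
  "Yset n = {((0,1,i+1),(1,1,2),(0,1,i),(1,1,int n + 1)) | i. 1 \<le> i \<and> i \<le> int n}"

definition Aset :: "nat \<Rightarrow> tile set" where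
  "Aset n = {((0,0,i+1),(1,1,2),(0,1,i),(1,1,int n)) | i. 1 \<le> i \<and> i \<le> int n}"

definition jtile :: "nat \<Rightarrow> int \<Rightarrow> int \<Rightarrow> int \<Rightarrow> int \<Rightarrow> tile" where
  "jtile n k l r s = ((0,k,l),(0,r,s),(0,s,r + int n),(0,l,k + int n))"

definition Jpairs :: "(int \<times> int) set" where
  "Jpairs = {(0,0),(0,1),(1,1)}"

definition J'set :: "nat \<Rightarrow> tile set" where
  "J'set n = {jtile n k l r s | k l r s. (k,l) \<in> Jpairs \<and> (r,s) \<in> Jpairs}"

definition Jset :: "nat \<Rightarrow> tile set" where
  "Jset n = J'set n - {jtile n 0 0 1 1, jtile n 1 1 0 0}"

definition T'set :: "nat \<Rightarrow> tile set" where
  "T'set n = Wset n \<union> B'set n \<union> Gset n \<union> Yset n \<union> Aset n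
     \<union> hat ` B'set n \<union> hat ` Gset n \<union> hat ` Yset n \<union> hat ` Aset n \<union> J'set n"

definition Tset :: "nat \<Rightarrow> tile set" where
  "Tset n = Wset n \<union> Bset n \<union> Gset n \<union> Yset n
     \<union> hat ` Bset n \<union> hat ` Gset n \<union> hat ` Yset n \<union> Jset n"

type_synonym config = "int \<times> int \<Rightarrow> tile"

definition valid_config :: "tile set \<Rightarrow> config \<Rightarrow> bool" where
  "valid_config T x \<longleftrightarrow>
     (\<forall>a b. x (a, b) \<in> T
        \<and> RIGHT (x (a, b)) = LEFT (x (a + 1, b))
        \<and> TOP (x (a, b)) = BOTTOM (x (a, b + 1)))"

definition Omega' :: "nat \<Rightarrow> config set" where
  "Omega' n = {x. valid_config (T'set n) x}"

definition Omega :: "nat \<Rightarrow> config set" where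
  "Omega n = {x. valid_config (Tset n) x}"

definition shift :: "int \<times> int \<Rightarrow> config \<Rightarrow> config" where
  "shift k x = (\<lambda>(a, b). x (a + fst k, b + snd k))"

definition tau :: "nat \<Rightarrow> color \<Rightarrow> color list" where
  "tau n c = (case c of (x, y, z) \<Rightarrow>
     (if x \<noteq> z then (0, x - y + 1, int n) # replicate (nat (z - x - 1)) (1, 1, int n)
                      @ replicate (nat (int n + 1 - z)) (1, 1, int n + 1)
      else (0, x - y + 1, int n + 1) # replicate (nat (int n - z)) (1, 1, int n + 1)))"

text \<open>Rectangular patterns of width w and height h: cell (i,j) with i < w, j < h,
  (0,0) the lower-left cell.\<close>

definition valid_pattern :: "tile set \<Rightarrow> nat \<Rightarrow> nat \<Rightarrow> (nat \<times> nat \<Rightarrow> tile) \<Rightarrow> bool" where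
  "valid_pattern T w h p \<longleftrightarrow>
     (\<forall>i j. i < w \<and> j < h \<longrightarrow> p (i, j) \<in> T)
   \<and> (\<forall>i j. i + 1 < w \<and> j < h \<longrightarrow> RIGHT (p (i, j)) = LEFT (p (i + 1, j)))
   \<and> (\<forall>i j. i < w \<and> j + 1 < h \<longrightarrow> TOP (p (i, j)) = BOTTOM (p (i, j + 1)))"

definition bottom_labels :: "nat \<Rightarrow> (nat \<times> nat \<Rightarrow> tile) \<Rightarrow> color list" where
  "bottom_labels w p = map (\<lambda>i. BOTTOM (p (i, 0))) [0..<w]"
definition top_labels :: "nat \<Rightarrow> nat \<Rightarrow> (nat \<times> nat \<Rightarrow> tile) \<Rightarrow> color list" where
  "top_labels w h p = map (\<lambda>i. TOP (p (i, h - 1))) [0..<w]"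
definition left_labels :: "nat \<Rightarrow> (nat \<times> nat \<Rightarrow> tile) \<Rightarrow> color list" where
  "left_labels h p = map (\<lambda>j. LEFT (p (0, j))) [0..<h]"
definition right_labels :: "nat \<Rightarrow> nat \<Rightarrow> (nat \<times> nat \<Rightarrow> tile) \<Rightarrow> color list" where
  "right_labels w h p = map (\<lambda>j. RIGHT (p (w - 1, j))) [0..<h]"

definition tile_width :: "nat \<Rightarrow> tile \<Rightarrow> nat" where
  "tile_width n t = length (tau n (BOTTOM t))"
definition tile_height :: "nat \<Rightarrow> tile \<Rightarrow> nat" where
  "tile_height n t = length (tau n (LEFT t))"

definition omega_tile :: "nat \<Rightarrow> tile \<Rightarrow> (nat \<times> nat \<Rightarrow> tile)" where
  "omega_tile n t = (THE p.
      valid_pattern (T'set n) (tile_width n t) (tile_height n t) p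
    \<and> right_labels (tile_width n t) (tile_height n t) p = tau n (RIGHT t)
    \<and> top_labels (tile_width n t) (tile_height n t) p = tau n (TOP t)
    \<and> left_labels (tile_height n t) p = tau n (LEFT t)
    \<and> bottom_labels (tile_width n t) p = tau n (BOTTOM t)
    \<and> (\<forall>i j. \<not> (i < tile_width n t \<and> j < tile_height n t) \<longrightarrow> p (i, j) = undefined))"

definition off :: "(int \<Rightarrow> int) \<Rightarrow> int \<Rightarrow> int" where
  "off w k = (if 0 \<le> k then (\<Sum>i\<in>{0..<k}. w i) else - (\<Sum>i\<in>{k..<0}. w i))"

text \<open>In a configuration all tiles of a column have the same width and all tiles of a row
  the same height; column m1 has width given by x(m1,0), row m2 height given by x(0,m2).\<close>

definition omega_conf :: "nat \<Rightarrow> config \<Rightarrow> config" where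
  "omega_conf n x = (\<lambda>(a, b).
     let W = (\<lambda>m1. int (tile_width n (x (m1, 0))));
         H = (\<lambda>m2. int (tile_height n (x (0, m2))));
         m1 = (THE m1. off W m1 \<le> a \<and> a < off W (m1 + 1));
         m2 = (THE m2. off H m2 \<le> b \<and> b < off H (m2 + 1))
     in omega_tile n (x (m1, m2)) (nat (a - off W m1), nat (b - off H m2)))"

end

theory Submission
  imports Defs
begin


definition lab :: "nat \<Rightarrow> int \<Rightarrow> int \<Rightarrow> nat \<Rightarrow> nat \<Rightarrow> color list" where
  "lab n a b m1 m2 = (0,a,b) # replicate m1 (1,1,int n) @ replicate m2 (1,1,int n+1)"

lemma rep2_eq: "u \<noteq> v \<Longrightarrow> (replicate m1 u @ replicate m2 v = replicate m1' u @ replicate m2' v) \<longleftrightarrow> m1 = m1' \<and> m2 = m2'"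
proof (induction m1 arbitrary: m1')
  case 0
  then show ?case by (cases m1'; cases m2) (auto dest: arg_cong[where f=length])
next
  case (Suc m)
  then show ?case by (cases m1'; cases m2'; cases m2) auto
qed

lemma lab_eq: "lab n a b m1 m2 = lab n a' b' m1' m2' \<longleftrightarrow> a=a' \<and> b=b' \<and> m1=m1' \<and> m2=m2'"
  unfolding lab_def by (subst list.inject) (auto simp: rep2_eq)

lemma tau_lab: "tau n (x,y,z) = (if x \<noteq> z then lab n (x-y+1) (int n) (nat (z-x-1)) (nat (int n+1-z))
   else lab n (x-y+1) (int n+1) 0 (nat (int n-z)))"
  unfolding tau_def lab_def by auto

definition sL :: "int \<Rightarrow> int \<Rightarrow> int \<Rightarrow> int" where
  "sL k sg w = (if k = 1 then 1 else min w (sg+1))"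

definition stripP :: "nat \<Rightarrow> int \<Rightarrow> int \<Rightarrow> int \<Rightarrow> int \<Rightarrow> int \<Rightarrow> int \<Rightarrow> bool" where
  "stripP n k l r2 s2 sg w \<longleftrightarrow> w = int n+1+r2-l \<and> 1 \<le> sg \<and> sg \<le> w \<and> sg \<le> int n+1-l \<and> (k=1 \<longrightarrow> sg=1)
     \<and> s2 = (if k=1 \<or> sg<w then 1 else 0)"

definition relP :: "nat \<Rightarrow> int \<Rightarrow> int \<Rightarrow> int \<Rightarrow> int \<Rightarrow> int \<Rightarrow> bool" where
  "relP n k sg sg' w h \<longleftrightarrow> (w \<ge> 2 \<longrightarrow> (h = int n+1 \<and> sL k sg w = w \<and> sg' = 1) \<or> (h = int n \<and> sL k sg w = sg'))"

definition Jpar :: "int \<Rightarrow> int \<Rightarrow> int \<Rightarrow> int \<Rightarrow> bool" where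
  "Jpar k l r s \<longleftrightarrow> (k,l) \<in> Jpairs \<and> (r,s) \<in> Jpairs \<and> \<not>(k=0\<and>l=0\<and>r=1\<and>s=1) \<and> \<not>(k=1\<and>l=1\<and>r=0\<and>s=0)"

definition Ftile :: "nat \<Rightarrow> int \<Rightarrow> int \<Rightarrow> int \<Rightarrow> tile" where
  "Ftile n b c i = ((0,c,i+1),(1,1,1+b),(0,b,i),(1,1,int n+c))"

lemma Ftile_in: assumes "b \<in> {0,1}" "c \<in> {0,1}" "0 \<le> i" "i \<le> int n" "b = 1 \<longrightarrow> 1 \<le> i"
  shows "Ftile n b c i \<in> T'set n"
proof -
  have "Ftile n b c i \<in> B'set n \<union> Gset n \<union> Yset n \<union> Aset n"
    using assms unfolding Ftile_def B'set_def Gset_def Yset_def Aset_def btile_def by auto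
  then show ?thesis unfolding T'set_def by auto
qed

lemma hatF_in: assumes "b \<in> {0,1}" "c \<in> {0,1}" "0 \<le> i" "i \<le> int n" "b = 1 \<longrightarrow> 1 \<le> i"
  shows "hat (Ftile n b c i) \<in> T'set n"
proof -
  have "Ftile n b c i \<in> B'set n \<union> Gset n \<union> Yset n \<union> Aset n"
    using assms unfolding Ftile_def B'set_def Gset_def Yset_def Aset_def btile_def by auto
  then show ?thesis unfolding T'set_def by auto
qed

lemma Wt_in: "1 \<le> a \<Longrightarrow> a \<le> int n \<Longrightarrow> 1 \<le> d \<Longrightarrow> d \<le> int n \<Longrightarrow> ((1,1,a+1),(1,1,d+1),(1,1,a),(1,1,d)) \<in> T'set n"
  unfolding T'set_def Wset_def by blast

lemma J_in: "(k,l) \<in> Jpairs \<Longrightarrow> (r,s) \<in> Jpairs \<Longrightarrow> jtile n k l r s \<in> T'set n"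
  unfolding T'set_def J'set_def by blast

lemma Jpar_D: "Jpar k l r s \<Longrightarrow> k\<in>{0,1} \<and> l\<in>{0,1} \<and> r\<in>{0,1} \<and> s\<in>{0,1} \<and> k\<le>l \<and> r\<le>s"
  unfolding Jpar_def Jpairs_def by auto

lemma BOT_simp[simp]: "BOTTOM (a,b,c,d) = d" "TOP (a,b,c,d) = b" "LEFT (a,b,c,d) = c" "RIGHT (a,b,c,d) = a"
  by (auto simp: BOTTOM_def TOP_def LEFT_def RIGHT_def)

locale blk =
  fixes n :: nat and k l r s k2 l2 r2 s2 k3 l3 r3 s3 k4 l4 r4 s4 sg sg' tu tu' w h :: int
  assumes n1: "1 \<le> n"
    and J1: "Jpar k l r s" and J2: "Jpar k2 l2 r2 s2" and J3: "Jpar k3 l3 r3 s3" and J4: "Jpar k4 l4 r4 s4"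
    and S1: "stripP n k l r2 s2 sg w" and S2: "stripP n k3 l3 r4 s4 sg' w"
    and H1: "stripP n r s k3 l3 tu h" and H2: "stripP n r2 s2 k4 l4 tu' h"
    and R4: "relP n k sg sg' w h" and R3: "relP n r tu tu' h w"
    and wn: "w = int n \<or> w = int n + 1" and hn: "h = int n \<or> h = int n + 1"
begin

lemma facts: "k \<in> {0,1}" "l \<in> {0,1}" "r \<in> {0,1}" "s \<in> {0,1}" "k \<le> l" "r \<le> s"
   "k2 \<in> {0,1}" "l2 \<in> {0,1}" "r2 \<in> {0,1}" "s2 \<in> {0,1}" "k2 \<le> l2" "r2 \<le> s2"
   "k3 \<in> {0,1}" "l3 \<in> {0,1}" "r3 \<in> {0,1}" "s3 \<in> {0,1}" "k3 \<le> l3" "r3 \<le> s3"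
   "k4 \<in> {0,1}" "l4 \<in> {0,1}" "r4 \<in> {0,1}" "s4 \<in> {0,1}" "k4 \<le> l4" "r4 \<le> s4"
  using Jpar_D[OF J1] Jpar_D[OF J2] Jpar_D[OF J3] Jpar_D[OF J4] by auto

abbreviation "LB \<equiv> lab n l (k+int n) (nat (sg-1)) (nat (w-sg))"
abbreviation "LL \<equiv> lab n s (r+int n) (nat (tu-1)) (nat (h-tu))"
abbreviation "LT \<equiv> lab n l3 (k3+int n) (nat (sg'-1)) (nat (w-sg'))"
abbreviation "LR \<equiv> lab n s2 (r2+int n) (nat (tu'-1)) (nat (h-tu'))"

definition "good t \<longleftrightarrow> t \<in> T'set n \<and> tau n (BOTTOM t) = LB \<and> tau n (LEFT t) = LL \<and> tau n (TOP t) = LT \<and> tau n (RIGHT t) = LR"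

lemma caseJJ: assumes "w = int n + 1" "h = int n + 1" shows "\<exists>t. good t"
proof -
  have k0: "k = 0" and sg: "sg \<ge> w - 1" and sg': "sg' = 1" using R4 assms n1 facts(1) unfolding relP_def sL_def by (auto split: if_splits)
  have r0: "r = 0" and tu: "tu \<ge> h - 1" and tu': "tu' = 1" using R3 assms n1 facts(3) unfolding relP_def sL_def by (auto split: if_splits)
  let ?t = "jtile n (1-s2) (1-l) (1-l3) (1-s)"
  have "l = r2" "s = k3" using S1 H1 assms unfolding stripP_def by auto
  then have "?t \<in> T'set n" using facts(2,4,10,12,14,17) by (intro J_in) (auto simp: Jpairs_def)
  moreover have "tau n (BOTTOM ?t) = LB"
  proof -
    have e: "tau n (BOTTOM ?t) = lab n l (int n) (nat (int n-s2)) (nat s2)"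
      using n1 facts(10) by (auto simp: jtile_def tau_lab)
    have "s2 = (if sg < w then 1 else 0)" "sg \<le> w" using S1 k0 unfolding stripP_def by auto
    then show ?thesis unfolding e lab_eq using k0 sg assms by auto
  qed
  moreover have "tau n (LEFT ?t) = LL"
  proof -
    have e: "tau n (LEFT ?t) = lab n s (int n) (nat (int n-l3)) (nat l3)"
      using n1 facts(14) by (auto simp: jtile_def tau_lab)
    have "l3 = (if tu < h then 1 else 0)" "tu \<le> h" using H1 r0 unfolding stripP_def by auto
    then show ?thesis unfolding e lab_eq using r0 tu assms by auto
  qed
  moreover have "tau n (TOP ?t) = LT"
  proof -
    have e: "tau n (TOP ?t) = lab n l3 (int n + s) 0 n"
      using n1 facts(4) by (auto simp: jtile_def tau_lab)
    show ?thesis unfolding e lab_eq using sg' \<open>s = k3\<close> assms by auto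
  qed
  moreover have "tau n (RIGHT ?t) = LR"
  proof -
    have e: "tau n (RIGHT ?t) = lab n s2 (int n + l) 0 n"
      using n1 facts(2) by (auto simp: jtile_def tau_lab)
    show ?thesis unfolding e lab_eq using tu' \<open>l = r2\<close> assms by auto
  qed
  ultimately show ?thesis unfolding good_def by blast
qed

lemma caseW: assumes "w = int n" "h = int n" shows "\<exists>t. good t"
proof -
  have l1: "l = 1" "r2 = 0" "l3 = 1" "r4 = 0" using S1 S2 facts(2,9,14,21) assms unfolding stripP_def by auto
  have s1: "s = 1" "k3 = 0" "s2 = 1" "k4 = 0" using H1 H2 facts(4,13,10,19) assms unfolding stripP_def by auto
  define d where "d = (if k = 1 then 1 else sg + 1)"
  define a where "a = (if r = 1 then 1 else tu + 1)"
  have sgw: "k = 0 \<Longrightarrow> sg < w" "1 \<le> sg" "k = 1 \<Longrightarrow> sg = 1" "1 \<le> sg'" "sg' \<le> w" using S1 S2 s1 unfolding stripP_def by (auto split: if_splits)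
  have tuh: "r = 0 \<Longrightarrow> tu < h" "1 \<le> tu" "r = 1 \<Longrightarrow> tu = 1" "1 \<le> tu'" "tu' \<le> h" using H1 H2 l1 unfolding stripP_def by (auto split: if_splits)
  have d1: "1 \<le> d" "d \<le> int n" using sgw facts(1) assms unfolding d_def by auto
  have a1: "1 \<le> a" "a \<le> int n" using tuh facts(3) assms unfolding a_def by auto
  have sg'd: "sg' = d"
  proof (cases "w \<ge> 2")
    case True
    then have "sL k sg w = sg'" using R4 assms unfolding relP_def by auto
    then show ?thesis using sgw facts(1) unfolding sL_def d_def by auto
  next
    case False
    then show ?thesis using sgw facts(1) assms unfolding d_def by auto
  qed
  have tu'a: "tu' = a"
  proof (cases "h \<ge> 2")
    case True
    then have "sL r tu h = tu'" using R3 assms unfolding relP_def by auto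
    then show ?thesis using tuh facts(3) unfolding sL_def a_def by auto
  next
    case False
    then show ?thesis using tuh facts(3) assms unfolding a_def by auto
  qed
  let ?t = "((1,1,a+1),(1,1,d+1),(1,1,a),(1,1,d)) :: tile"
  have "?t \<in> T'set n" using a1 d1 by (intro Wt_in)
  moreover have "tau n (BOTTOM ?t) = LB"
  proof (cases "k = 1")
    case True
    then show ?thesis using sgw l1 d1 unfolding d_def assms by (auto simp: tau_lab lab_eq)
  next
    case False
    then show ?thesis using sgw l1 d1 facts(1) unfolding d_def assms by (auto simp: tau_lab lab_eq)
  qed
  moreover have "tau n (LEFT ?t) = LL"
  proof (cases "r = 1")
    case True
    then show ?thesis using tuh s1 a1 unfolding a_def assms by (auto simp: tau_lab lab_eq)
  next
    case False
    then show ?thesis using tuh s1 a1 facts(3) unfolding a_def assms by (auto simp: tau_lab lab_eq)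
  qed
  moreover have "tau n (TOP ?t) = LT"
    using sg'd d1 l1 s1 unfolding assms by (auto simp: tau_lab lab_eq)
  moreover have "tau n (RIGHT ?t) = LR"
    using tu'a a1 l1 s1 unfolding assms by (auto simp: tau_lab lab_eq)
  ultimately show ?thesis unfolding good_def by blast
qed

lemma caseS: assumes "w = int n" "h = int n + 1" shows "\<exists>t. good t"
proof -
  have l1: "l = 1" "r2 = 0" "l3 = 1" "r4 = 0" using S1 S2 facts(2,9,14,21) assms unfolding stripP_def by auto
  have s1: "s = k3" "s2 = k4" using H1 H2 assms unfolding stripP_def by auto
  have sgw: "1 \<le> sg" "sg \<le> w" "k = 1 \<Longrightarrow> sg = 1" "1 \<le> sg'" "sg' \<le> w" "s2 = (if k=1 \<or> sg<w then 1 else 0)"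
    using S1 S2 unfolding stripP_def by auto
  have tuh: "r = 1 \<Longrightarrow> tu = 1" "1 \<le> tu" "tu < h" "1 \<le> tu'" "tu' \<le> h" using H1 H2 l1 assms n1 unfolding stripP_def by (auto split: if_splits)
  have R4': "sg' = 1 \<and> (k = 1 \<longrightarrow> n = 1) \<and> (k = 0 \<longrightarrow> sg \<ge> w - 1)"
  proof (cases "w \<ge> 2")
    case True
    then have "sL k sg w = w" "sg' = 1" using R4 assms unfolding relP_def by auto
    then show ?thesis using sgw facts(1) True unfolding sL_def by (auto split: if_splits)
  next
    case False
    then show ?thesis using sgw facts(1) assms n1 by auto
  qed
  have R3': "tu' = sL r tu h"
    using R3 assms n1 unfolding relP_def by auto
  define c where "c = (if k = 1 then 0 else sg - int n + 1)"
  define b where "b = 1 - s"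
  define i where "i = (if r = 1 then 0 else tu)"
  have c01: "c \<in> {0,1}" using R4' sgw assms facts(1) unfolding c_def by auto
  have b01: "b \<in> {0,1}" using facts(4) unfolding b_def by auto
  have i1: "0 \<le> i" "i \<le> int n" "b = 1 \<longrightarrow> 1 \<le> i" using tuh facts(3,4,6) assms unfolding i_def b_def by auto
  let ?t = "Ftile n b c i"
  have "?t \<in> T'set n" using c01 b01 i1 by (intro Ftile_in)
  moreover have "tau n (BOTTOM ?t) = LB"
  proof (cases "k = 1")
    case True
    then show ?thesis using sgw l1 R4' assms unfolding c_def Ftile_def by (auto simp: tau_lab lab_eq)
  next
    case False
    then have "k = 0" using facts(1) by auto
    then show ?thesis using sgw l1 R4' assms unfolding c_def Ftile_def by (auto simp: tau_lab lab_eq)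
  qed
  moreover have "tau n (TOP ?t) = LT"
    using R4' l1 s1 b01 sgw facts(4) assms unfolding b_def Ftile_def by (auto simp: tau_lab lab_eq)
  moreover have "tau n (LEFT ?t) = LL"
  proof (cases "r = 1")
    case True
    then show ?thesis using tuh facts(6) facts(4) assms unfolding i_def b_def Ftile_def by (auto simp: tau_lab lab_eq)
  next
    case False
    then show ?thesis using tuh facts(3,4) assms unfolding i_def b_def Ftile_def by (auto simp: tau_lab lab_eq)
  qed
  moreover have "tau n (RIGHT ?t) = LR"
  proof -
    have "tu' - 1 = i" using R3' tuh facts(3) assms unfolding sL_def i_def by auto
    moreover have "s2 = 1 - c" using sgw R4' facts(1) assms unfolding c_def by auto
    ultimately show ?thesis using l1 i1 assms unfolding Ftile_def by (auto simp: tau_lab lab_eq)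
  qed
  ultimately show ?thesis unfolding good_def by blast
qed

lemma caseH: assumes "w = int n + 1" "h = int n" shows "\<exists>t. good t"
proof -
  have l1: "s = 1" "k3 = 0" "s2 = 1" "k4 = 0" using H1 H2 facts(4,13,10,19) assms unfolding stripP_def by auto
  have s1: "l = r2" "l3 = r4" using S1 S2 assms unfolding stripP_def by auto
  have tuh: "1 \<le> tu" "tu \<le> h" "r = 1 \<Longrightarrow> tu = 1" "1 \<le> tu'" "tu' \<le> h" "l3 = (if r=1 \<or> tu<h then 1 else 0)"
    using H1 H2 unfolding stripP_def by auto
  have sgw: "k = 1 \<Longrightarrow> sg = 1" "1 \<le> sg" "sg < w" "1 \<le> sg'" "sg' \<le> w" using S1 S2 l1 assms n1 unfolding stripP_def by (auto split: if_splits)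
  have R3': "tu' = 1 \<and> (r = 1 \<longrightarrow> n = 1) \<and> (r = 0 \<longrightarrow> tu \<ge> h - 1)"
  proof (cases "h \<ge> 2")
    case True
    then have "sL r tu h = h" "tu' = 1" using R3 assms unfolding relP_def by auto
    then show ?thesis using tuh facts(3) True unfolding sL_def by (auto split: if_splits)
  next
    case False
    then show ?thesis using tuh facts(3) assms n1 by auto
  qed
  have R4': "sg' = sL k sg w"
    using R4 assms n1 unfolding relP_def by auto
  define c where "c = (if r = 1 then 0 else tu - int n + 1)"
  define b where "b = 1 - l"
  define i where "i = (if k = 1 then 0 else sg)"
  have c01: "c \<in> {0,1}" using R3' tuh assms facts(3) unfolding c_def by auto
  have b01: "b \<in> {0,1}" using facts(2) unfolding b_def by auto
  have i1: "0 \<le> i" "i \<le> int n" "b = 1 \<longrightarrow> 1 \<le> i" using sgw facts(1,2,5) assms unfolding i_def b_def by auto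
  let ?t = "hat (Ftile n b c i)"
  have "?t \<in> T'set n" using c01 b01 i1 by (intro hatF_in)
  moreover have "tau n (LEFT ?t) = LL"
  proof (cases "r = 1")
    case True
    then show ?thesis using tuh l1 R3' assms unfolding c_def Ftile_def hat_def by (auto simp: tau_lab lab_eq)
  next
    case False
    then have "r = 0" using facts(3) by auto
    then show ?thesis using tuh l1 R3' assms unfolding c_def Ftile_def hat_def by (auto simp: tau_lab lab_eq)
  qed
  moreover have "tau n (RIGHT ?t) = LR"
    using R3' l1 s1 b01 tuh facts(2) assms unfolding b_def Ftile_def hat_def by (auto simp: tau_lab lab_eq)
  moreover have "tau n (BOTTOM ?t) = LB"
  proof (cases "k = 1")
    case True
    then show ?thesis using sgw facts(5) facts(2) assms unfolding i_def b_def Ftile_def hat_def by (auto simp: tau_lab lab_eq)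
  next
    case False
    then show ?thesis using sgw facts(1,2) assms unfolding i_def b_def Ftile_def hat_def by (auto simp: tau_lab lab_eq)
  qed
  moreover have "tau n (TOP ?t) = LT"
  proof -
    have "sg' - 1 = i" using R4' sgw facts(1) assms unfolding sL_def i_def by auto
    moreover have "l3 = 1 - c" using tuh R3' facts(3) assms unfolding c_def by auto
    ultimately show ?thesis using l1 i1 assms unfolding Ftile_def hat_def by (auto simp: tau_lab lab_eq)
  qed
  ultimately show ?thesis unfolding good_def by blast
qed

lemma key: "\<exists>t. good t"
  using caseJJ caseW caseS caseH wn hn by blast

end



definition Wform :: "nat \<Rightarrow> tile \<Rightarrow> bool" where
  "Wform n t \<longleftrightarrow> (\<exists>i j. t = ((1,1,i+1),(1,1,j+1),(1,1,i),(1,1,j)) \<and> 1 \<le> i \<and> i \<le> int n \<and> 1 \<le> j \<and> j \<le> int n)"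
definition Sform :: "nat \<Rightarrow> tile \<Rightarrow> bool" where
  "Sform n t \<longleftrightarrow> (\<exists>a a' v. t = ((0,a',v+1),(1,1,1+a),(0,a,v),(1,1,int n+a')) \<and> 0 \<le> a \<and> a \<le> a' \<and> a' \<le> 1
     \<and> 0 \<le> v \<and> v \<le> int n \<and> (a' = 0 \<longrightarrow> v \<le> int n - 1) \<and> (a = 1 \<longrightarrow> 1 \<le> v))"
definition Jform :: "nat \<Rightarrow> tile \<Rightarrow> bool" where
  "Jform n t \<longleftrightarrow> (\<exists>k l r s. t = jtile n k l r s \<and> Jpar k l r s)"

lemma hat_hat[simp]: "hat (hat t) = t" unfolding hat_def by (auto split: prod.splits)
lemma hat_simps[simp]: "LEFT (hat t) = BOTTOM t" "BOTTOM (hat t) = LEFT t" "RIGHT (hat t) = TOP t" "TOP (hat t) = RIGHT t"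
  unfolding hat_def LEFT_def BOTTOM_def RIGHT_def TOP_def by (auto split: prod.splits)

lemma jtile_eq: "jtile n k l r s = jtile n k' l' r' s' \<longleftrightarrow> k=k' \<and> l=l' \<and> r=r' \<and> s=s'"
  unfolding jtile_def by auto

lemma hat_jtile: "hat (jtile n k l r s) = jtile n r s k l" unfolding hat_def jtile_def by auto

lemma Jpar_sym: "Jpar k l r s \<Longrightarrow> Jpar r s k l" unfolding Jpar_def by auto

lemma Jset_form: "t \<in> Jset n \<Longrightarrow> Jform n t"
  unfolding Jset_def J'set_def Jform_def Jpar_def by (auto simp: jtile_eq)

lemma Tset_cases:
  assumes "t \<in> Tset n"
  shows "Wform n t \<or> Sform n t \<or> Sform n (hat t) \<or> Jform n t"
proof -
  have "t \<in> Wset n \<or> t \<in> Bset n \<or> t \<in> Gset n \<or> t \<in> Yset n \<or> hat t \<in> Bset n \<or> hat t \<in> Gset n \<or> hat t \<in> Yset n \<or> t \<in> Jset n"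
    using assms unfolding Tset_def by auto
  moreover have "t \<in> Wset n \<Longrightarrow> Wform n t" unfolding Wset_def Wform_def by auto
  moreover have "Sform n t" if tin: "t \<in> Bset n" for t
  proof -
    obtain i where "t = btile n i" "0 \<le> i" "i \<le> int n - 1" using tin unfolding Bset_def by blast
    then show ?thesis unfolding Sform_def btile_def by (intro exI[of _ 0] exI[of _ i]) auto
  qed
  moreover have "Sform n t" if tin: "t \<in> Gset n" for t
  proof -
    obtain i where "t = ((0,1,i+1),(1,1,1),(0,0,i),(1,1,int n + 1))" "0 \<le> i" "i \<le> int n" using tin unfolding Gset_def by blast
    then show ?thesis unfolding Sform_def by (intro exI[of _ 0] exI[of _ 1] exI[of _ i]) auto
  qed
  moreover have "Sform n t" if tin: "t \<in> Yset n" for t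
  proof -
    obtain i where "t = ((0,1,i+1),(1,1,2),(0,1,i),(1,1,int n + 1))" "1 \<le> i" "i \<le> int n" using tin unfolding Yset_def by blast
    then show ?thesis unfolding Sform_def by (intro exI[of _ 1] exI[of _ 1] exI[of _ i]) auto
  qed
  moreover have "t \<in> Jset n \<Longrightarrow> Jform n t" by (rule Jset_form)
  ultimately show ?thesis by blast
qed

lemma hat_Tset: "t \<in> Tset n \<Longrightarrow> hat t \<in> Tset n"
proof -
  have J: "hat t \<in> Jset n" if tJ: "t \<in> Jset n" for t
  proof -
    obtain k l r s where "t = jtile n k l r s" "Jpar k l r s" using Jset_form[OF tJ] unfolding Jform_def by auto
    then show ?thesis unfolding Jset_def J'set_def Jpar_def by (auto simp: hat_jtile jtile_eq)
  qed
  have W: "hat t \<in> Wset n" if "t \<in> Wset n" for t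
    using that unfolding Wset_def hat_def by force
  have I: "t \<in> hat ` A \<Longrightarrow> hat t \<in> A" for A by auto
  assume "t \<in> Tset n"
  then show ?thesis unfolding Tset_def using J W I[of "Bset n"] I[of "Gset n"] I[of "Yset n"]
      imageI[of t "Bset n" hat] imageI[of t "Gset n" hat] imageI[of t "Yset n" hat] by blast
qed

lemma Tfst: assumes "t \<in> Tset n"
  shows "fst (RIGHT t) = fst (LEFT t)" "fst (TOP t) = fst (BOTTOM t)" "fst (LEFT t) \<in> {0,1}" "fst (BOTTOM t) \<in> {0,1}"
  using Tset_cases[OF assms] unfolding Wform_def Sform_def Jform_def jtile_def
  by (auto simp: hat_def split: prod.splits)

lemma T_J: assumes "t \<in> Tset n" "fst (LEFT t) = 0" "fst (BOTTOM t) = 0" shows "Jform n t"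
  using Tset_cases[OF assms(1)] assms(2,3) unfolding Wform_def Sform_def Jform_def
  by (auto simp: hat_def split: prod.splits)

lemma T_S: assumes "t \<in> Tset n" "fst (LEFT t) = 0" "fst (BOTTOM t) \<noteq> 0" shows "Sform n t"
  using Tset_cases[OF assms(1)] assms(2,3) unfolding Wform_def Sform_def Jform_def jtile_def
  by (auto simp: hat_def split: prod.splits)

lemma T_W: assumes "t \<in> Tset n" "fst (LEFT t) \<noteq> 0" "fst (BOTTOM t) \<noteq> 0" shows "Wform n t"
  using Tset_cases[OF assms(1)] assms(2,3) unfolding Wform_def Sform_def Jform_def jtile_def
  by (auto simp: hat_def split: prod.splits)



definition Rf :: "nat \<Rightarrow> color \<Rightarrow> color \<Rightarrow> color" where
  "Rf n L B = (if fst L = 1 then (if fst B = 1 then (1,1,snd (snd L)+1) else (1,1,1+fst (snd B)))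
      else (0, snd (snd B) - int n, if fst B = 1 then snd (snd L) + 1 else fst (snd B)))"
definition Tf :: "nat \<Rightarrow> color \<Rightarrow> color \<Rightarrow> color" where
  "Tf n L B = (if fst B = 1 then (if fst L = 1 then (1,1,snd (snd B)+1) else (1,1,1+fst (snd L)))
      else (0, snd (snd L) - int n, if fst L = 1 then snd (snd B) + 1 else fst (snd L)))"

definition Vn :: "nat \<Rightarrow> color \<Rightarrow> bool" where
  "Vn n c \<longleftrightarrow> (case c of (x,y,z) \<Rightarrow> 0 \<le> x \<and> x \<le> y \<and> y \<le> 1 \<and> y \<le> z \<and> z \<le> int n + 1)"

definition goodT :: "nat \<Rightarrow> tile \<Rightarrow> bool" where
  "goodT n t \<longleftrightarrow> RIGHT t = Rf n (LEFT t) (BOTTOM t) \<and> TOP t = Tf n (LEFT t) (BOTTOM t)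
     \<and> Vn n (LEFT t) \<and> Vn n (RIGHT t) \<and> Vn n (TOP t) \<and> Vn n (BOTTOM t)"

lemma F_family: "u \<in> B'set n \<union> Gset n \<union> Yset n \<union> Aset n \<Longrightarrow>
   \<exists>b c i. u = Ftile n b c i \<and> b \<in> {0,1} \<and> c \<in> {0,1} \<and> 0 \<le> i \<and> i \<le> int n \<and> (b = 1 \<longrightarrow> 1 \<le> i)"
  unfolding B'set_def Gset_def Yset_def Aset_def Ftile_def btile_def
  by auto

lemma goodT_F: "1 \<le> n \<Longrightarrow> b \<in> {0,1} \<Longrightarrow> c \<in> {0,1} \<Longrightarrow> 0 \<le> i \<Longrightarrow> i \<le> int n \<Longrightarrow> (b = 1 \<longrightarrow> 1 \<le> i) \<Longrightarrow>
   goodT n (Ftile n b c i) \<and> goodT n (hat (Ftile n b c i))"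
  unfolding goodT_def Ftile_def Rf_def Tf_def Vn_def hat_def by auto

lemma goodT_all: assumes "t \<in> T'set n" "1 \<le> n" shows "goodT n t"
proof -
  have "t \<in> Wset n \<or> t \<in> B'set n \<union> Gset n \<union> Yset n \<union> Aset n \<or> hat t \<in> B'set n \<union> Gset n \<union> Yset n \<union> Aset n \<or> t \<in> J'set n"
    using assms unfolding T'set_def by auto
  moreover have "goodT n t" if "t \<in> Wset n" using that assms unfolding Wset_def goodT_def Rf_def Tf_def Vn_def by auto
  moreover have "goodT n t" if tin: "t \<in> B'set n \<union> Gset n \<union> Yset n \<union> Aset n"
    using F_family[OF tin] goodT_F assms(2) by blast
  moreover have "goodT n t" if tin: "hat t \<in> B'set n \<union> Gset n \<union> Yset n \<union> Aset n"
    using F_family[OF tin] goodT_F assms(2) by (metis hat_hat)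
  moreover have "goodT n t" if "t \<in> J'set n" using that assms unfolding J'set_def Jpairs_def jtile_def goodT_def Rf_def Tf_def Vn_def by auto
  ultimately show ?thesis by blast
qed

lemma T'_det: "t \<in> T'set n \<Longrightarrow> t' \<in> T'set n \<Longrightarrow> 1 \<le> n \<Longrightarrow> LEFT t = LEFT t' \<Longrightarrow> BOTTOM t = BOTTOM t' \<Longrightarrow> t = t'"
  using goodT_all[of t n] goodT_all[of t' n] unfolding goodT_def LEFT_def BOTTOM_def RIGHT_def TOP_def
  by (metis prod.collapse)

lemma len_lab: "length (lab n a b m1 m2) = 1 + m1 + m2" unfolding lab_def by simp

lemma tau_inj: assumes "1 \<le> n" "Vn n c" "Vn n c'" "tau n c = tau n c'" shows "c = c'"
proof -
  obtain x y z where c: "c = (x,y,z)" by (cases c) auto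
  obtain x' y' z' where c': "c' = (x',y',z')" by (cases c') auto
  have L: "length (tau n c) = nat (int n + 1 - x)" using assms(1,2) unfolding c tau_lab Vn_def by (auto simp: len_lab)
  have L': "length (tau n c') = nat (int n + 1 - x')" using assms(1,3) unfolding c' tau_lab Vn_def by (auto simp: len_lab)
  have xx: "x = x'" using L L' assms unfolding c c' Vn_def by auto
  have e: "tau n (x,y,z) = tau n (x,y',z')" using assms(4) c c' xx by simp
  show ?thesis using e assms(2,3) unfolding c c' xx tau_lab Vn_def by (auto simp: lab_eq split: if_splits)
qed



lemma pattern_unique:
  assumes T: "\<And>t t'. t \<in> T \<Longrightarrow> t' \<in> T \<Longrightarrow> LEFT t = LEFT t' \<Longrightarrow> BOTTOM t = BOTTOM t' \<Longrightarrow> t = t'"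
    and p: "valid_pattern T w h p" and q: "valid_pattern T w h q"
    and l: "left_labels h p = left_labels h q" and b: "bottom_labels w p = bottom_labels w q"
  shows "i < w \<Longrightarrow> j < h \<Longrightarrow> p (i,j) = q (i,j)"
proof (induction "i + j" arbitrary: i j rule: less_induct)
  case less
  have L: "LEFT (p (i,j)) = LEFT (q (i,j))"
  proof (cases i)
    case 0
    have "left_labels h p ! j = left_labels h q ! j" using l by simp
    then show ?thesis using less.prems 0 unfolding left_labels_def by simp
  next
    case (Suc i')
    then have "p (i',j) = q (i',j)" using less by auto
    moreover have "RIGHT (p (i',j)) = LEFT (p (i,j))" "RIGHT (q (i',j)) = LEFT (q (i,j))"
      using p q less.prems Suc unfolding valid_pattern_def by auto
    ultimately show ?thesis by simp
  qed
  have B: "BOTTOM (p (i,j)) = BOTTOM (q (i,j))"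
  proof (cases j)
    case 0
    have "bottom_labels w p ! i = bottom_labels w q ! i" using b by simp
    then show ?thesis using less.prems 0 unfolding bottom_labels_def by simp
  next
    case (Suc j')
    then have "p (i,j') = q (i,j')" using less by auto
    moreover have "TOP (p (i,j')) = BOTTOM (p (i,j))" "TOP (q (i,j')) = BOTTOM (q (i,j))"
      using p q less.prems Suc unfolding valid_pattern_def by auto
    ultimately show ?thesis by simp
  qed
  show ?case using T[OF _ _ L B] p q less.prems unfolding valid_pattern_def by auto
qed

lemma off_step: "off W (m+1) = off W m + W m"
proof -
  consider "0 \<le> m" | "m = -1" | "m < -1" by linarith
  then show ?thesis
  proof cases
    case 1
    then have "{0..<m+1} = insert m {0..<m}" by auto
    then show ?thesis using 1 unfolding off_def by simp
  next
    case 2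
    then have "{-1..<0::int} = {-1}" by auto
    then show ?thesis using 2 unfolding off_def by simp
  next
    case 3
    then have "{m..<0} = insert m {m+1..<0}" by auto
    then show ?thesis using 3 unfolding off_def by simp
  qed
qed

lemma off_eq: fixes W X :: "int \<Rightarrow> int" assumes "\<And>m. W m = X (m+1) - X m" shows "off W m = X m - X 0"
proof (induction m rule: int_induct[where k=0])
  case base
  then show ?case unfolding off_def by simp
next
  case (step1 i)
  then show ?case using off_step[of W i] assms[of i] by simp
next
  case (step2 i)
  then show ?case using off_step[of W "i-1"] assms[of "i-1"] by simp
qed

lemma smono_le: fixes X :: "int \<Rightarrow> int" assumes "\<And>i. X i < X (i+1)" shows "i \<le> i' \<Longrightarrow> X i + (i' - i) \<le> X i'"
proof (induction i' rule: int_ge_induct)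
  case base
  then show ?case by simp
next
  case (step i')
  then show ?case using assms[of i'] by simp
qed

lemma smono_less: fixes X :: "int \<Rightarrow> int" assumes "\<And>i. X i < X (i+1)" "i < i'" shows "X i < X i'"
  using smono_le[of X, OF assms(1), of i i'] assms(2) by simp

lemma smono_iff: fixes X :: "int \<Rightarrow> int" assumes "\<And>i. X i < X (i+1)" shows "X i < X i' \<longleftrightarrow> i < i'"
  using smono_less[of X, OF assms(1)] by (metis linorder_neqE_linordered_idom order_less_asym)

lemma find_idx: fixes X :: "int \<Rightarrow> int" assumes "\<And>i. X i < X (i+1)" shows "\<exists>i. X i \<le> a \<and> a < X (i+1)"
proof -
  have up: "\<forall>a. X 0 \<le> a \<longrightarrow> a < X (int m) \<longrightarrow> (\<exists>i. X i \<le> a \<and> a < X (i+1))" for m :: nat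
  proof (induction m)
    case 0 then show ?case by auto
  next
    case (Suc m)
    show ?case
    proof (intro allI impI)
      fix a assume "X 0 \<le> a" "a < X (int (Suc m))"
      show "\<exists>i. X i \<le> a \<and> a < X (i+1)"
      proof (cases "a < X (int m)")
        case True then show ?thesis using Suc \<open>X 0 \<le> a\<close> by auto
      next
        case False then show ?thesis using \<open>a < X (int (Suc m))\<close> by (intro exI[of _ "int m"]) (auto simp: add.commute)
      qed
    qed
  qed
  have down: "\<forall>a. a < X 0 \<longrightarrow> X (- int m) \<le> a \<longrightarrow> (\<exists>i. X i \<le> a \<and> a < X (i+1))" for m :: nat
  proof (induction m)
    case 0 then show ?case by auto
  next
    case (Suc m)
    show ?case
    proof (intro allI impI)
      fix a assume "a < X 0" "X (- int (Suc m)) \<le> a"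
      show "\<exists>i. X i \<le> a \<and> a < X (i+1)"
      proof (cases "X (- int m) \<le> a")
        case True then show ?thesis using Suc \<open>a < X 0\<close> by auto
      next
        case False then show ?thesis using \<open>X (- int (Suc m)) \<le> a\<close> by (intro exI[of _ "- int (Suc m)"]) auto
      qed
    qed
  qed
  show ?thesis
  proof (cases "X 0 \<le> a")
    case True
    have "X 0 + int (nat (a - X 0) + 1) \<le> X (int (nat (a - X 0) + 1))" using smono_le[of X, OF assms, of 0 "int (nat (a - X 0) + 1)"] by simp
    then show ?thesis using up[of "nat (a - X 0) + 1"] True by auto
  next
    case False
    have "X (- int (nat (X 0 - a))) + int (nat (X 0 - a)) \<le> X 0" using smono_le[of X, OF assms, of "- int (nat (X 0 - a))" 0] by simp
    then show ?thesis using down[of "nat (X 0 - a)"] False by auto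
  qed
qed

lemma idx_unique: fixes X :: "int \<Rightarrow> int" assumes "\<And>i. X i < X (i+1)" "X i \<le> a" "a < X (i+1)" "X i' \<le> a" "a < X (i'+1)" shows "i = i'"
  using smono_iff[of X, OF assms(1)] assms(2-5) by (metis linorder_neqE_linordered_idom order.strict_trans1 zless_add1_eq zless_imp_add1_zle dual_order.strict_iff_not)

lemma enum_exists:
  fixes P :: "int \<Rightarrow> bool" and d :: int
  assumes gap: "\<And>a. \<exists>c. a < c \<and> c \<le> a + d \<and> P c"
  shows "\<exists>X::int\<Rightarrow>int. (\<forall>i. X i < X (i+1)) \<and> (\<forall>i. P (X i)) \<and> (\<forall>a. P a \<longrightarrow> (\<exists>i. X i = a))"
proof -
  define nx where "nx a = a + int (LEAST e::nat. e > 0 \<and> P (a + int e))" for a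
  define pv where "pv a = a - int (LEAST e::nat. e > 0 \<and> P (a - int e))" for a
  have exn: "\<exists>e::nat. e > 0 \<and> P (a + int e)" for a
  proof -
    obtain c where c: "a < c" "P c" using gap[of a] by blast
    then have "nat (c - a) > 0" "a + int (nat (c - a)) = c" by simp_all
    then show ?thesis using c(2) by (intro exI[of _ "nat (c - a)"]) simp
  qed
  have exp: "\<exists>e::nat. e > 0 \<and> P (a - int e)" for a
  proof -
    obtain c where c: "a - d - 1 < c" "c \<le> a - d - 1 + d" "P c" using gap[of "a - d - 1"] by blast
    then have "nat (a - c) > 0" "a - int (nat (a - c)) = c" by simp_all
    then show ?thesis using c(3) by (intro exI[of _ "nat (a - c)"]) simp
  qed
  have nx1: "P (nx a)" "a < nx a" for a
    using LeastI_ex[OF exn[of a]] unfolding nx_def by auto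
  have nx2: "\<not> P c" if "a < c" "c < nx a" for a c
  proof
    assume "P c"
    then have "(LEAST e::nat. e > 0 \<and> P (a + int e)) \<le> nat (c - a)" using that by (intro Least_le) auto
    then show False using that unfolding nx_def by auto
  qed
  have pv1: "P (pv a)" "pv a < a" for a
    using LeastI_ex[OF exp[of a]] unfolding pv_def by auto
  have pv2: "\<not> P c" if "pv a < c" "c < a" for a c
  proof
    assume "P c"
    then have "(LEAST e::nat. e > 0 \<and> P (a - int e)) \<le> nat (a - c)" using that by (intro Least_le) auto
    then show False using that unfolding pv_def by auto
  qed
  have nxpv: "nx (pv a) = a" if "P a" for a
  proof -
    have "(LEAST e::nat. e > 0 \<and> P (pv a + int e)) = nat (a - pv a)"
    proof (rule Least_equality)
      show "nat (a - pv a) > 0 \<and> P (pv a + int (nat (a - pv a)))" using pv1[of a] that by auto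
    next
      fix e :: nat assume e: "e > 0 \<and> P (pv a + int e)"
      show "nat (a - pv a) \<le> e"
      proof (rule ccontr)
        assume "\<not> nat (a - pv a) \<le> e"
        then have "int e < a - pv a" by simp
        then show False using pv2[of a "pv a + int e"] e by simp
      qed
    qed
    then show ?thesis unfolding nx_def[of "pv a"] using pv1[of a] by auto
  qed
  define c0 where "c0 = nx 0"
  define X where "X i = (if i \<ge> 0 then (nx ^^ nat i) c0 else (pv ^^ nat (-i)) c0)" for i
  have Pn: "P ((nx ^^ m) c0)" for m by (induction m) (auto simp: c0_def nx1)
  have Pp: "P ((pv ^^ m) c0)" for m by (induction m) (auto simp: c0_def nx1 pv1)
  have PX: "P (X i)" for i unfolding X_def using Pn Pp by auto
  have step: "X (i+1) = nx (X i)" for i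
  proof -
    consider "i \<ge> 0" | "i = -1" | "i < -1" by linarith
    then show ?thesis
    proof cases
      case 1
      then have "nat (i+1) = Suc (nat i)" by auto
      then show ?thesis using 1 unfolding X_def by auto
    next
      case 2
      then show ?thesis unfolding X_def using nxpv[of c0] nx1 c0_def by auto
    next
      case 3
      then have "nat (-i) = Suc (nat (-(i+1)))" by auto
      then have "X i = pv (X (i+1))" using 3 unfolding X_def by auto
      then show ?thesis using nxpv[OF PX[of "i+1"]] by simp
    qed
  qed
  have mono: "X i < X (i+1)" for i unfolding step[of i] by (rule nx1(2))
  have surj: "\<exists>i. X i = a" if "P a" for a
  proof -
    obtain i where "X i \<le> a" "a < X (i+1)" using find_idx[of X a] mono by auto
    then show ?thesis using nx2[of "X i" a] step[of i] that by (intro exI[of _ i]) force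
  qed
  have "(\<forall>i. X i < X (i + 1)) \<and> (\<forall>i. P (X i)) \<and> (\<forall>a. P a \<longrightarrow> (\<exists>i. X i = a))"
    using mono PX surj by auto
  then show ?thesis by (intro exI[where x=X])
qed

lemma step01:
  fixes g :: "nat \<Rightarrow> int" and m :: nat
  assumes m1: "1 \<le> m"
    and mono: "\<And>p. 1 \<le> p \<Longrightarrow> p + 1 < m \<Longrightarrow> g p \<le> g (p+1)"
    and b01: "\<And>p. 1 \<le> p \<Longrightarrow> p < m \<Longrightarrow> g p \<in> {0,1}"
  defines "\<sigma> \<equiv> (LEAST p. 1 \<le> p \<and> (p = m \<or> g p = 1))"
  shows "1 \<le> \<sigma>" "\<sigma> \<le> m" "\<And>p. 1 \<le> p \<Longrightarrow> p < m \<Longrightarrow> g p = (if \<sigma> \<le> p then 1 else 0)"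
proof -
  have ex: "1 \<le> m \<and> (m = m \<or> g m = 1)" using m1 by simp
  have L: "1 \<le> \<sigma> \<and> (\<sigma> = m \<or> g \<sigma> = 1)" unfolding \<sigma>_def by (rule LeastI[of _ m]) (use ex in auto)
  have le: "\<sigma> \<le> m" unfolding \<sigma>_def by (rule Least_le) (use ex in auto)
  show "1 \<le> \<sigma>" "\<sigma> \<le> m" using L le by auto
  have below: "g p = 0" if "1 \<le> p" "p < \<sigma>" "p < m" for p
  proof -
    have "\<not> (1 \<le> p \<and> (p = m \<or> g p = 1))" using not_less_Least[of p "\<lambda>p. 1 \<le> p \<and> (p = m \<or> g p = 1)"] that unfolding \<sigma>_def by auto
    then show ?thesis using b01[of p] that by auto
  qed
  have above: "g (\<sigma> + d) = 1" if "\<sigma> + d < m" for d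
    using that
  proof (induction d)
    case 0
    then show ?case using L by auto
  next
    case (Suc d)
    then have "g (\<sigma> + d) \<le> g (\<sigma> + d + 1)" using mono[of "\<sigma> + d"] L by auto
    moreover have "g (\<sigma> + Suc d) \<in> {0,1}" using b01[of "\<sigma> + Suc d"] Suc L by auto
    ultimately show ?case using Suc by auto
  qed
  fix p assume "1 \<le> p" "p < m"
  show "g p = (if \<sigma> \<le> p then 1 else 0)"
  proof (cases "\<sigma> \<le> p")
    case True
    then show ?thesis using above[of "p - \<sigma>"] \<open>p < m\<close> by auto
  next
    case False
    then show ?thesis using below \<open>1 \<le> p\<close> \<open>p < m\<close> by auto
  qed
qed

lemma relP_intro:
  fixes w a b h :: int
  assumes w2: "w \<ge> 2" and a: "1 \<le> a" "a \<le> w" and b: "1 \<le> b" "b \<le> w" and hn: "h \<ge> int n"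
    and all: "\<And>p. 1 \<le> p \<Longrightarrow> p \<le> w - 1 \<Longrightarrow> h = int n + (if p \<ge> b then 1 else 0) - (if p \<ge> a then 1 else 0)"
  shows "(h = int n + 1 \<and> a = w \<and> b = 1) \<or> (h = int n \<and> a = b)"
proof -
  have p1: "h = int n + (if 1 \<ge> b then 1 else 0) - (if 1 \<ge> a then 1 else 0)" using all[of 1] w2 by auto
  have pw: "h = int n + (if w - 1 \<ge> b then 1 else 0) - (if w - 1 \<ge> a then 1 else 0)" using all[of "w-1"] w2 by auto
  have pa: "h = int n + (if a \<ge> b then 1 else 0) - (if a \<ge> a then 1 else 0)" if "a \<le> w - 1" using all[of a] that a by auto
  have pb: "h = int n + (if b \<ge> b then 1 else 0) - (if b \<ge> a then 1 else 0)" if "b \<le> w - 1" using all[of b] that b by auto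
  show ?thesis
  proof (cases "h = int n + 1")
    case True
    then show ?thesis using p1 pw a b by (auto split: if_splits)
  next
    case False
    then have "h = int n" using p1 hn by (auto split: if_splits)
    moreover have "a = b"
    proof (rule ccontr)
      assume "a \<noteq> b"
      then consider "a < b" | "b < a" by linarith
      then show False using pa pb a b \<open>h = int n\<close> by cases (auto split: if_splits)
    qed
    ultimately show ?thesis by auto
  qed
qed



definition jk :: "tile \<Rightarrow> int" where "jk t = fst (snd (RIGHT t))"
definition jl :: "tile \<Rightarrow> int" where "jl t = snd (snd (RIGHT t))"
definition jr :: "tile \<Rightarrow> int" where "jr t = fst (snd (TOP t))"
definition js :: "tile \<Rightarrow> int" where "js t = snd (snd (TOP t))"

lemma Jform_acc: "Jform n t \<Longrightarrow> t = jtile n (jk t) (jl t) (jr t) (js t) \<and> Jpar (jk t) (jl t) (jr t) (js t)"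
  unfolding Jform_def jk_def jl_def jr_def js_def jtile_def by auto

lemma acc_hat: "jk (hat t) = jr t" "jl (hat t) = js t" "jr (hat t) = jk t" "js (hat t) = jl t"
  unfolding jk_def jl_def jr_def js_def by auto

definition tr :: "config \<Rightarrow> config" where "tr x = (\<lambda>(a,b). hat (x (b,a)))"

lemma tr_valid: assumes "valid_config (Tset n) x" shows "valid_config (Tset n) (tr x)"
  using assms hat_Tset unfolding valid_config_def tr_def by auto

definition lv1 :: "tile \<Rightarrow> int" where "lv1 t = fst (snd (LEFT t))"
definition lv2 :: "tile \<Rightarrow> int" where "lv2 t = snd (snd (LEFT t))"
definition rv1 :: "tile \<Rightarrow> int" where "rv1 t = fst (snd (RIGHT t))"

lemma Sform_D: assumes "Sform n t"
  shows "LEFT t = (0, lv1 t, lv2 t)" "RIGHT t = (0, rv1 t, lv2 t + 1)" "TOP t = (1,1,1 + lv1 t)" "BOTTOM t = (1,1,int n + rv1 t)"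
    "0 \<le> lv1 t" "lv1 t \<le> rv1 t" "rv1 t \<le> 1" "0 \<le> lv2 t" "lv2 t \<le> int n" "rv1 t = 0 \<Longrightarrow> lv2 t \<le> int n - 1"
  using assms unfolding Sform_def lv1_def lv2_def rv1_def by auto

lemma Wform_D: assumes "Wform n t"
  shows "TOP t = (1,1, snd (snd (BOTTOM t)) + 1)" "fst (BOTTOM t) = 1" "fst (snd (BOTTOM t)) = 1"
  using assms unfolding Wform_def by auto

lemma jtile_acc: "LEFT (jtile n k l r s) = (0,s,r+int n)" "RIGHT (jtile n k l r s) = (0,k,l)"
   "BOTTOM (jtile n k l r s) = (0,l,k+int n)" "TOP (jtile n k l r s) = (0,r,s)"
  unfolding jtile_def by auto

locale cfg =
  fixes n :: nat and x :: config and X Y :: "int \<Rightarrow> int"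
  assumes n1: "1 \<le> n" and vx: "valid_config (Tset n) x"
    and Xm: "\<And>i. X i < X (i+1)" and XJ: "\<And>i. fst (BOTTOM (x (X i, 0))) = 0"
    and Xs: "\<And>a. fst (BOTTOM (x (a, 0))) = 0 \<Longrightarrow> \<exists>i. X i = a"
    and Ym: "\<And>j. Y j < Y (j+1)" and YJ: "\<And>j. fst (LEFT (x (0, Y j))) = 0"
    and Ys: "\<And>b. fst (LEFT (x (0, b))) = 0 \<Longrightarrow> \<exists>j. Y j = b"
begin

lemma tin: "x p \<in> Tset n" using vx unfolding valid_config_def by (cases p) auto
lemma mR: "RIGHT (x (a,b)) = LEFT (x (a+1,b))" using vx unfolding valid_config_def by auto
lemma mT: "TOP (x (a,b)) = BOTTOM (x (a,b+1))" using vx unfolding valid_config_def by auto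

lemma colc: "fst (BOTTOM (x (a,b))) = fst (BOTTOM (x (a,0)))"
proof (induction b rule: int_induct[where k=0])
  case base then show ?case by simp
next
  case (step1 i) then show ?case using mT[of a i] Tfst(2)[OF tin[of "(a,i)"]] by simp
next
  case (step2 i) then show ?case using mT[of a "i-1"] Tfst(2)[OF tin[of "(a,i-1)"]] by simp
qed

lemma rowc: "fst (LEFT (x (a,b))) = fst (LEFT (x (0,b)))"
proof (induction a rule: int_induct[where k=0])
  case base then show ?case by simp
next
  case (step1 i) then show ?case using mR[of i b] Tfst(1)[OF tin[of "(i,b)"]] by simp
next
  case (step2 i) then show ?case using mR[of "i-1" b] Tfst(1)[OF tin[of "(i-1,b)"]] by simp
qed

lemma Jcol: "fst (BOTTOM (x (X i, b))) = 0" using colc[of "X i" b] XJ[of i] by simp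
lemma Jrow: "fst (LEFT (x (a, Y j))) = 0" using rowc[of a "Y j"] YJ[of j] by simp

lemma nJcol: assumes "X i < a" "a < X (i+1)" shows "fst (BOTTOM (x (a, b))) \<noteq> 0"
proof
  assume "fst (BOTTOM (x (a, b))) = 0"
  then obtain i' where "X i' = a" using Xs colc by metis
  then show False using assms smono_iff[of X, OF Xm] by (metis zless_add1_eq not_less_iff_gr_or_eq)
qed

lemma nJrow: assumes "Y j < b" "b < Y (j+1)" shows "fst (LEFT (x (a, b))) \<noteq> 0"
proof
  assume "fst (LEFT (x (a, b))) = 0"
  then obtain j' where "Y j' = b" using Ys rowc by metis
  then show False using assms smono_iff[of Y, OF Ym] by (metis zless_add1_eq not_less_iff_gr_or_eq)
qed

definition "wd i = X (i+1) - X i"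
definition "ht j = Y (j+1) - Y j"
definition "Jx i j = x (X i, Y j)"

lemma wd_pos: "wd i \<ge> 1" using Xm[of i] unfolding wd_def by simp
lemma ht_pos: "ht j \<ge> 1" using Ym[of j] unfolding ht_def by simp

lemma JxJ: "Jx i j = jtile n (jk (Jx i j)) (jl (Jx i j)) (jr (Jx i j)) (js (Jx i j))" "Jpar (jk (Jx i j)) (jl (Jx i j)) (jr (Jx i j)) (js (Jx i j))"
  using Jform_acc[OF T_J[OF tin Jrow Jcol]] unfolding Jx_def by auto

lemma Sx: "1 \<le> p \<Longrightarrow> p < wd i \<Longrightarrow> Sform n (x (X i + p, Y j))"
  by (rule T_S[OF tin Jrow nJcol[of i]]) (auto simp: wd_def)

lemma Wx: "1 \<le> p \<Longrightarrow> p < wd i \<Longrightarrow> 1 \<le> q \<Longrightarrow> q < ht j \<Longrightarrow> Wform n (x (X i + p, Y j + q))"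
  by (rule T_W[OF tin nJrow[of j] nJcol[of i]]) (auto simp: wd_def ht_def)

definition "sgf i j = int (LEAST p::nat. 1 \<le> p \<and> (p = nat (wd i) \<or> rv1 (x (X i + int p, Y j)) = 1))"

lemma strip:
  fixes i j
  defines "k \<equiv> jk (Jx i j)" and "l \<equiv> jl (Jx i j)" and "r2 \<equiv> jr (Jx (i+1) j)" and "s2 \<equiv> js (Jx (i+1) j)"
    and "w \<equiv> wd i" and "sg \<equiv> sgf i j"
  shows "stripP n k l r2 s2 sg w"
    and "map (\<lambda>p. BOTTOM (x (X i + int p, Y j))) [0..<nat w] = lab n l (k + int n) (nat (sg - 1)) (nat (w - sg))"
    and "\<And>p. 1 \<le> p \<Longrightarrow> p < w \<Longrightarrow> TOP (x (X i + p, Y j)) = (1,1,1 + (if p \<ge> sL k sg w then 1 else 0))"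
    and "\<And>p. 1 \<le> p \<Longrightarrow> p < w \<Longrightarrow> BOTTOM (x (X i + p, Y j)) = (1,1,int n + (if p \<ge> sg then 1 else 0))"
proof -
  define a0 where "a0 = X i"
  define b where "b = Y j"
  have w1: "1 \<le> w" using wd_pos unfolding w_def by auto
  have Xi1: "X (i+1) = a0 + w" unfolding a0_def w_def wd_def by simp
  have J: "x (a0, b) = jtile n k l (jr (Jx i j)) (js (Jx i j))" "Jpar k l (jr (Jx i j)) (js (Jx i j))"
    using JxJ[of i j] unfolding a0_def b_def k_def l_def Jx_def by auto
  have J2: "x (a0 + w, b) = jtile n (jk (Jx (i+1) j)) (jl (Jx (i+1) j)) r2 s2"
    using JxJ[of "i+1" j] Xi1 unfolding b_def r2_def s2_def Jx_def by auto
  have kl: "k \<in> {0,1}" "l \<in> {0,1}" "k \<le> l" using Jpar_D[OF J(2)] by auto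
  have S: "Sform n (x (a0 + p, b))" if "1 \<le> p" "p < w" for p
    using Sx that unfolding a0_def b_def w_def by auto
  have A: "lv2 (x (a0 + int p, b)) = l + int p - 1 \<and> LEFT (x (a0 + int p, b)) = (0, lv1 (x (a0 + int p, b)), lv2 (x (a0 + int p, b)))"
    if "1 \<le> p" "int p \<le> w" for p :: nat
    using that
  proof (induction p)
    case 0 then show ?case by simp
  next
    case (Suc p)
    show ?case
    proof (cases "p = 0")
      case True
      have "LEFT (x (a0 + 1, b)) = (0,k,l)" using mR[of a0 b] J jtile_acc by simp
      then show ?thesis using True unfolding lv1_def lv2_def by simp
    next
      case False
      then have Sp: "Sform n (x (a0 + int p, b))" using S Suc.prems by auto
      have "LEFT (x (a0 + int (Suc p), b)) = RIGHT (x (a0 + int p, b))" using mR[of "a0 + int p" b] by (simp add: ac_simps)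
      then show ?thesis using Sform_D[OF Sp] Suc False unfolding lv1_def lv2_def by auto
    qed
  qed
  define g where "g p = rv1 (x (a0 + int p, b))" for p :: nat
  have lvg: "lv1 (x (a0 + int (p+1), b)) = g p" if "1 \<le> p" "int p < w" for p :: nat
  proof -
    have "LEFT (x (a0 + int (p+1), b)) = RIGHT (x (a0 + int p, b))" using mR[of "a0 + int p" b] by (simp add: ac_simps)
    then show ?thesis using Sform_D[OF S[of "int p"]] that unfolding g_def lv1_def by auto
  qed
  have gmono: "g p \<le> g (p+1)" if "1 \<le> p" "p + 1 < nat w" for p
    using lvg[of p] Sform_D(6)[OF S[of "int (p+1)"]] that unfolding g_def by auto
  have g01: "g p \<in> {0,1}" if "1 \<le> p" "p < nat w" for p
    using Sform_D(5-7)[OF S[of "int p"]] lvg that unfolding g_def by fastforce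
  have sgdef: "sg = int (LEAST p. 1 \<le> p \<and> (p = nat w \<or> g p = 1))"
    unfolding sg_def sgf_def g_def a0_def b_def w_def by simp
  have Ls: "(LEAST p. 1 \<le> p \<and> (p = nat w \<or> g p = 1)) = nat sg" using sgdef by simp
  have nw1: "1 \<le> nat w" using w1 by simp
  note st0 = step01[of "nat w" g, OF nw1 gmono g01]
  have st: "1 \<le> nat (sg)" "nat sg \<le> nat w" "\<And>p. 1 \<le> p \<Longrightarrow> p < nat w \<Longrightarrow> g p = (if nat sg \<le> p then 1 else 0)"
    using st0 unfolding Ls by auto
  have sg1: "1 \<le> sg" "sg \<le> w" using st(1,2) w1 by auto
  have gsg: "g p = (if sg \<le> int p then 1 else 0)" if "1 \<le> p" "int p < w" for p :: nat
    using st(3)[of p] that sg1 by auto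
  have lv1p: "lv1 (x (a0 + p, b)) = (if p = 1 then k else if sg \<le> p - 1 then 1 else 0)" if "1 \<le> p" "p \<le> w" for p :: int
  proof (cases "p = 1")
    case True
    have "LEFT (x (a0 + 1, b)) = (0,k,l)" using mR[of a0 b] J jtile_acc by simp
    then show ?thesis using True unfolding lv1_def by simp
  next
    case False
    then have "lv1 (x (a0 + int (nat (p-1) + 1), b)) = g (nat (p-1))" using that by (intro lvg) auto
    moreover have "g (nat (p-1)) = (if sg \<le> int (nat (p-1)) then 1 else 0)" using that False by (intro gsg) auto
    ultimately show ?thesis using False that by auto
  qed
  have LJ2: "LEFT (x (a0 + w, b)) = (0, s2, r2 + int n)" using J2 jtile_acc by simp
  have "1 \<le> nat w" "int (nat w) \<le> w" using w1 by auto
  then have "lv2 (x (a0 + w, b)) = l + w - 1" using A[of "nat w"] w1 by auto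
  then have wf: "w = int n + 1 + r2 - l"
    using LJ2 unfolding lv2_def by auto
  have s2f: "s2 = lv1 (x (a0 + w, b))" using LJ2 unfolding lv1_def by simp
  have k1: "k = 1 \<Longrightarrow> sg = 1"
  proof -
    assume "k = 1"
    show "sg = 1"
    proof (cases "w = 1")
      case True then show ?thesis using sg1 by auto
    next
      case False
      then have "lv1 (x (a0 + 2, b)) = (if sg \<le> 1 then 1 else 0)" using lv1p[of 2] w1 by auto
      moreover have "lv1 (x (a0 + 1, b)) \<le> rv1 (x (a0 + 1, b))" using Sform_D(6)[OF S[of 1]] False w1 by auto
      moreover have "lv1 (x (a0 + 1, b)) = 1" using lv1p[of 1] \<open>k = 1\<close> w1 by auto
      moreover have "lv1 (x (a0 + 2, b)) = rv1 (x (a0 + 1, b))" using lvg[of 1] False w1 unfolding g_def by auto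
      ultimately show ?thesis using sg1 Sform_D(7)[OF S[of 1]] False w1 by (auto split: if_splits)
    qed
  qed
  have s2v: "s2 = (if k = 1 \<or> sg < w then 1 else 0)"
  proof (cases "w = 1")
    case True then show ?thesis using s2f lv1p[of 1] kl sg1 by auto
  next
    case False then show ?thesis using s2f lv1p[of w] k1 w1 sg1 by auto
  qed
  have sgl: "sg \<le> int n + 1 - l"
  proof (cases "sg = 1")
    case True then show ?thesis using kl n1 by auto
  next
    case False
    then have "g (nat (sg - 1)) = 0" using gsg[of "nat (sg - 1)"] sg1 by auto
    then have "lv2 (x (a0 + (sg - 1), b)) \<le> int n - 1" using Sform_D(10)[OF S[of "sg - 1"]] False sg1 unfolding g_def by auto
    moreover have "lv2 (x (a0 + (sg - 1), b)) = l + (sg - 1) - 1" using A[of "nat (sg - 1)"] False sg1 by auto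
    ultimately show ?thesis by auto
  qed
  show "stripP n k l r2 s2 sg w" unfolding stripP_def using wf sg1 sgl k1 s2v by auto
  show T: "\<And>p. 1 \<le> p \<Longrightarrow> p < w \<Longrightarrow> TOP (x (X i + p, Y j)) = (1,1,1 + (if p \<ge> sL k sg w then 1 else 0))"
  proof -
    fix p assume p: "1 \<le> p" "p < w"
    have "TOP (x (a0 + p, b)) = (1,1,1 + lv1 (x (a0 + p, b)))" using Sform_D(3)[OF S[OF p]] .
    moreover have "lv1 (x (a0 + p, b)) = (if p \<ge> sL k sg w then 1 else 0)"
      using lv1p[of p] p k1 kl sg1 unfolding sL_def by auto
    ultimately show "TOP (x (X i + p, Y j)) = (1,1,1 + (if p \<ge> sL k sg w then 1 else 0))" unfolding a0_def b_def by simp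
  qed
  show B: "\<And>p. 1 \<le> p \<Longrightarrow> p < w \<Longrightarrow> BOTTOM (x (X i + p, Y j)) = (1,1,int n + (if p \<ge> sg then 1 else 0))"
  proof -
    fix p assume p: "1 \<le> p" "p < w"
    have "BOTTOM (x (a0 + p, b)) = (1,1,int n + rv1 (x (a0 + p, b)))" using Sform_D(4)[OF S[OF p]] .
    moreover have "rv1 (x (a0 + p, b)) = (if p \<ge> sg then 1 else 0)" using gsg[of "nat p"] p unfolding g_def by auto
    ultimately show "BOTTOM (x (X i + p, Y j)) = (1,1,int n + (if p \<ge> sg then 1 else 0))" unfolding a0_def b_def by simp
  qed
  show "map (\<lambda>p. BOTTOM (x (X i + int p, Y j))) [0..<nat w] = lab n l (k + int n) (nat (sg - 1)) (nat (w - sg))"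
  proof (rule nth_equalityI)
    show "length (map (\<lambda>p. BOTTOM (x (X i + int p, Y j))) [0..<nat w]) = length (lab n l (k + int n) (nat (sg - 1)) (nat (w - sg)))"
      using sg1 unfolding lab_def by auto
  next
    fix q assume q: "q < length (map (\<lambda>p. BOTTOM (x (X i + int p, Y j))) [0..<nat w])"
    then have qw: "int q < w" by auto
    show "map (\<lambda>p. BOTTOM (x (X i + int p, Y j))) [0..<nat w] ! q = lab n l (k + int n) (nat (sg - 1)) (nat (w - sg)) ! q"
    proof (cases "q = 0")
      case True
      then show ?thesis using q J jtile_acc unfolding lab_def a0_def b_def by auto
    next
      case False
      then obtain q' where q': "q = Suc q'" by (cases q) auto
      have "BOTTOM (x (X i + int q, Y j)) = (1,1,int n + (if int q \<ge> sg then 1 else 0))" using B[of "int q"] qw False by auto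
      moreover have "lab n l (k + int n) (nat (sg - 1)) (nat (w - sg)) ! q = (if int q < sg then (1,1,int n) else (1,1,int n + 1))"
        using q' qw sg1 unfolding lab_def by (auto simp: nth_append)
      ultimately show ?thesis using qw by auto
    qed
  qed
qed

lemma wrun:
  assumes p: "1 \<le> p" "p < wd i"
  shows "snd (snd (BOTTOM (x (X i + p, Y (j+1))))) = snd (snd (TOP (x (X i + p, Y j)))) + ht j - 1"
proof -
  define a where "a = X i + p"
  have g: "snd (snd (BOTTOM (x (a, Y j + int q)))) = snd (snd (TOP (x (a, Y j)))) + int q - 1"
    if "1 \<le> q" "int q \<le> ht j" for q :: nat
    using that
  proof (induction q)
    case 0 then show ?case by simp
  next
    case (Suc q)
    show ?case
    proof (cases "q = 0")
      case True then show ?thesis using mT[of a "Y j"] by simp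
    next
      case False
      then have W: "Wform n (x (a, Y j + int q))" using Wx[OF p, of "int q" j] Suc.prems unfolding a_def by auto
      have "BOTTOM (x (a, Y j + int (Suc q))) = TOP (x (a, Y j + int q))" using mT[of a "Y j + int q"] by (simp add: ac_simps)
      then show ?thesis using Wform_D(1)[OF W] Suc False by auto
    qed
  qed
  have "1 \<le> nat (ht j)" "int (nat (ht j)) \<le> ht j" using ht_pos[of j] by auto
  from g[OF this] have "snd (snd (BOTTOM (x (a, Y j + ht j)))) = snd (snd (TOP (x (a, Y j)))) + ht j - 1"
    using ht_pos[of j] by simp
  then show ?thesis unfolding a_def ht_def by simp
qed

lemma R4:
  assumes "ht j \<ge> int n"
  shows "relP n (jk (Jx i j)) (sgf i j) (sgf i (j+1)) (wd i) (ht j)"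
  unfolding relP_def
proof (intro impI)
  let ?k = "jk (Jx i j)" and ?sg = "sgf i j" and ?sg' = "sgf i (j+1)" and ?w = "wd i" and ?h = "ht j"
  assume w2: "2 \<le> ?w"
  have S1: "stripP n ?k (jl (Jx i j)) (jr (Jx (i+1) j)) (js (Jx (i+1) j)) ?sg ?w" by (rule strip)
  have S2: "stripP n (jk (Jx i (j+1))) (jl (Jx i (j+1))) (jr (Jx (i+1) (j+1))) (js (Jx (i+1) (j+1))) ?sg' ?w" by (rule strip)
  have a: "1 \<le> sL ?k ?sg ?w" "sL ?k ?sg ?w \<le> ?w" using S1 w2 unfolding stripP_def sL_def by auto
  have b: "1 \<le> ?sg'" "?sg' \<le> ?w" using S2 unfolding stripP_def by auto
  have all: "?h = int n + (if p \<ge> ?sg' then 1 else 0) - (if p \<ge> sL ?k ?sg ?w then 1 else 0)"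
    if "1 \<le> p" "p \<le> ?w - 1" for p
  proof -
    have "TOP (x (X i + p, Y j)) = (1,1,1 + (if p \<ge> sL ?k ?sg ?w then 1 else 0))" using strip(3)[of p i j] that by auto
    moreover have "BOTTOM (x (X i + p, Y (j+1))) = (1,1,int n + (if p \<ge> ?sg' then 1 else 0))" using strip(4)[of p i "j+1"] that by auto
    moreover have "snd (snd (BOTTOM (x (X i + p, Y (j+1))))) = snd (snd (TOP (x (X i + p, Y j)))) + ht j - 1"
      using wrun[of p i j] that by auto
    ultimately show ?thesis by auto
  qed
  show "(?h = int n + 1 \<and> sL ?k ?sg ?w = ?w \<and> ?sg' = 1) \<or> (?h = int n \<and> sL ?k ?sg ?w = ?sg')"
    using relP_intro[OF w2 a b assms all] by auto
qed

lemma cfg_tr: "cfg n (tr x) Y X"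
proof
  show "1 \<le> n" by (rule n1)
  show "valid_config (Tset n) (tr x)" by (rule tr_valid[OF vx])
  show "\<And>i. Y i < Y (i+1)" by (rule Ym)
  show "\<And>i. X i < X (i+1)" by (rule Xm)
  show "\<And>i. fst (BOTTOM (tr x (Y i, 0))) = 0" using YJ unfolding tr_def by simp
  show "\<And>j. fst (LEFT (tr x (0, X j))) = 0" using XJ unfolding tr_def by simp
  show "\<And>a. fst (BOTTOM (tr x (a, 0))) = 0 \<Longrightarrow> \<exists>i. Y i = a" using Ys unfolding tr_def by simp
  show "\<And>b. fst (LEFT (tr x (0, b))) = 0 \<Longrightarrow> \<exists>j. X j = b" using Xs unfolding tr_def by simp
qed

lemma trJx: "cfg.Jx (tr x) Y X j i = hat (Jx i j)"
  using cfg.Jx_def[OF cfg_tr] unfolding Jx_def tr_def by simp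
lemma trwd: "cfg.wd Y j = ht j" using cfg.wd_def[OF cfg_tr] unfolding ht_def by simp
lemma trht: "cfg.ht X i = wd i" using cfg.ht_def[OF cfg_tr] unfolding wd_def by simp

lemma colstrip: "stripP n (jr (Jx i j)) (js (Jx i j)) (jk (Jx i (j+1))) (jl (Jx i (j+1))) (cfg.sgf (tr x) Y X j i) (ht j)"
  using cfg.strip(1)[OF cfg_tr, of j i] unfolding trJx trwd acc_hat .

lemma collab: "map (\<lambda>q. LEFT (x (X i, Y j + int q))) [0..<nat (ht j)] =
    lab n (js (Jx i j)) (jr (Jx i j) + int n) (nat (cfg.sgf (tr x) Y X j i - 1)) (nat (ht j - cfg.sgf (tr x) Y X j i))"
  using cfg.strip(2)[OF cfg_tr, of j i] unfolding trJx trwd acc_hat by (simp add: tr_def)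

lemma R3: "relP n (jr (Jx i j)) (cfg.sgf (tr x) Y X j i) (cfg.sgf (tr x) Y X j (i+1)) (ht j) (wd i)"
proof -
  have "wd i \<ge> int n" using strip(1)[of i j] Jpar_D[OF JxJ(2)[of i j]] Jpar_D[OF JxJ(2)[of "i+1" j]] unfolding stripP_def by auto
  then have "cfg.ht X i \<ge> int n" unfolding trht .
  then have "relP n (jk (cfg.Jx (tr x) Y X j i)) (cfg.sgf (tr x) Y X j i) (cfg.sgf (tr x) Y X j (i+1)) (cfg.wd Y j) (cfg.ht X i)"
    by (rule cfg.R4[OF cfg_tr])
  then show ?thesis unfolding trJx trwd trht acc_hat .
qed

lemma ht_ge: "ht j \<ge> int n"
  using colstrip[of 0 j] Jpar_D[OF JxJ(2)[of 0 j]] Jpar_D[OF JxJ(2)[of 0 "j+1"]] unfolding stripP_def by auto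
lemma wd_ge: "wd i \<ge> int n"
  using strip(1)[of i 0] Jpar_D[OF JxJ(2)[of i 0]] Jpar_D[OF JxJ(2)[of "i+1" 0]] unfolding stripP_def by auto

lemma wb_arith:
  fixes k l r2 s2 k3 l3 r4 s4 k5 l5 r6 s6 sg sg' sg'' w h1 h2 :: int
  assumes n1: "1 \<le> n" and J: "Jpar k l r1 s1" "Jpar k2 l2 r2 s2" "Jpar k3 l3 r3 s3" "Jpar k4 l4 r4 s4" "Jpar k5 l5 r5 s5" "Jpar k6 l6 r6 s6"
    and S: "stripP n k l r2 s2 sg w" "stripP n k3 l3 r4 s4 sg' w" "stripP n k5 l5 r6 s6 sg'' w"
    and R: "relP n k sg sg' w h1" "relP n k3 sg' sg'' w h2"
    and h: "h1 \<ge> int n" "h2 \<ge> int n"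
    and R3: "h1 \<ge> 2 \<Longrightarrow> w \<le> int n + 1" "h2 \<ge> 2 \<Longrightarrow> w \<le> int n + 1"
  shows "w \<le> int n + 1"
proof (rule ccontr)
  assume c: "\<not> w \<le> int n + 1"
  have D1: "k \<in> {0,1}" "l \<in> {0,1}" "k \<le> l" using Jpar_D[OF J(1)] by auto
  have D2: "r2 \<in> {0,1}" using Jpar_D[OF J(2)] by auto
  have D3: "k3 \<in> {0,1}" "l3 \<in> {0,1}" "k3 \<le> l3" using Jpar_D[OF J(3)] by auto
  have D4: "r4 \<in> {0,1}" using Jpar_D[OF J(4)] by auto
  have D5: "l5 \<in> {0,1}" using Jpar_D[OF J(5)] by auto
  have e1: "w = int n + 1 + r2 - l" "sg \<le> int n + 1 - l" "1 \<le> sg" using S(1) unfolding stripP_def by auto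
  have e2: "w = int n + 1 + r4 - l3" "sg' \<le> int n + 1 - l3" "1 \<le> sg'" using S(2) unfolding stripP_def by auto
  have e3: "sg'' \<le> int n + 1 - l5" using S(3) unfolding stripP_def by auto
  have w3: "w = int n + 2" "l = 0" "k = 0" "l3 = 0" "k3 = 0" using e1 e2 c D1 D2 D3 D4 by auto
  have "\<not> 2 \<le> h1" using R3(1) c by auto
  then have h11: "h1 = 1" "n = 1" using h(1) n1 by linarith+
  have "sg' = min w (sg + 1)" using R(1) h11 w3 unfolding relP_def sL_def by auto
  then have sg'2: "sg' = 2" using e1 e2 w3 h11 by auto
  have "\<not> 2 \<le> h2" using R3(2) c by auto
  then have h21: "h2 = 1" using h(2) h11 by linarith
  have "sg'' = 3" using R(2) h21 w3 sg'2 h11 unfolding relP_def sL_def by auto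
  then show False using e3 D5 h11 by auto
qed

lemma wbound: "wd i \<le> int n + 1"
proof -
  have r3: "ht j \<ge> 2 \<Longrightarrow> wd i \<le> int n + 1" for j
    using R3[of i j] unfolding relP_def by auto
  note S0 = strip(1)[of i 0] and S1 = strip(1)[of i 1] and S2 = strip(1)[of i 2]
  note R0 = R4[OF ht_ge, where i=i and j=0] and R1 = R4[OF ht_ge, where i=i and j=1]
  show ?thesis
    by (rule wb_arith[OF n1 JxJ(2)[of i 0] JxJ(2)[of "i+1" 0] JxJ(2)[of i 1] JxJ(2)[of "i+1" 1] JxJ(2)[of i 2] JxJ(2)[of "i+1" 2]
      S0 S1 S2 R0[simplified] R1[simplified] ht_ge ht_ge r3 r3])
qed

end



context cfg begin

lemma hbound: "ht j \<le> int n + 1"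
  using cfg.wbound[OF cfg_tr, of j] unfolding trwd .

definition "LBx i j = map (\<lambda>p. BOTTOM (x (X i + int p, Y j))) [0..<nat (wd i)]"
definition "LLx i j = map (\<lambda>q. LEFT (x (X i, Y j + int q))) [0..<nat (ht j)]"
definition "goodB i j t \<longleftrightarrow> t \<in> T'set n \<and> tau n (BOTTOM t) = LBx i j \<and> tau n (LEFT t) = LLx i j
    \<and> tau n (TOP t) = LBx i (j+1) \<and> tau n (RIGHT t) = LLx (i+1) j"

lemma block: "\<exists>t. goodB i j t"
proof -
  interpret B: blk n "jk (Jx i j)" "jl (Jx i j)" "jr (Jx i j)" "js (Jx i j)"
    "jk (Jx (i+1) j)" "jl (Jx (i+1) j)" "jr (Jx (i+1) j)" "js (Jx (i+1) j)"
    "jk (Jx i (j+1))" "jl (Jx i (j+1))" "jr (Jx i (j+1))" "js (Jx i (j+1))"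
    "jk (Jx (i+1) (j+1))" "jl (Jx (i+1) (j+1))" "jr (Jx (i+1) (j+1))" "js (Jx (i+1) (j+1))"
    "sgf i j" "sgf i (j+1)" "cfg.sgf (tr x) Y X j i" "cfg.sgf (tr x) Y X j (i+1)" "wd i" "ht j"
  proof
    show "1 \<le> n" by (rule n1)
    show "Jpar (jk (Jx i j)) (jl (Jx i j)) (jr (Jx i j)) (js (Jx i j))" by (rule JxJ(2))
    show "Jpar (jk (Jx (i+1) j)) (jl (Jx (i+1) j)) (jr (Jx (i+1) j)) (js (Jx (i+1) j))" by (rule JxJ(2))
    show "Jpar (jk (Jx i (j+1))) (jl (Jx i (j+1))) (jr (Jx i (j+1))) (js (Jx i (j+1)))" by (rule JxJ(2))
    show "Jpar (jk (Jx (i+1) (j+1))) (jl (Jx (i+1) (j+1))) (jr (Jx (i+1) (j+1))) (js (Jx (i+1) (j+1)))" by (rule JxJ(2))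
    show "stripP n (jk (Jx i j)) (jl (Jx i j)) (jr (Jx (i + 1) j)) (js (Jx (i + 1) j)) (sgf i j) (wd i)" by (rule strip(1))
    show "stripP n (jk (Jx i (j + 1))) (jl (Jx i (j + 1))) (jr (Jx (i + 1) (j + 1))) (js (Jx (i + 1) (j + 1))) (sgf i (j + 1)) (wd i)" by (rule strip(1))
    show "stripP n (jr (Jx i j)) (js (Jx i j)) (jk (Jx i (j + 1))) (jl (Jx i (j + 1))) (cfg.sgf (tr x) Y X j i) (ht j)" by (rule colstrip)
    show "stripP n (jr (Jx (i + 1) j)) (js (Jx (i + 1) j)) (jk (Jx (i + 1) (j + 1))) (jl (Jx (i + 1) (j + 1))) (cfg.sgf (tr x) Y X j (i + 1)) (ht j)" by (rule colstrip)
    show "relP n (jk (Jx i j)) (sgf i j) (sgf i (j + 1)) (wd i) (ht j)" by (rule R4[OF ht_ge])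
    show "relP n (jr (Jx i j)) (cfg.sgf (tr x) Y X j i) (cfg.sgf (tr x) Y X j (i + 1)) (ht j) (wd i)" by (rule R3)
    show "wd i = int n \<or> wd i = int n + 1" using wd_ge[of i] wbound[of i] by auto
    show "ht j = int n \<or> ht j = int n + 1" using ht_ge[of j] hbound[of j] by auto
  qed
  obtain t where "B.good t" using B.key by blast
  then show ?thesis unfolding B.good_def goodB_def LBx_def LLx_def
    using strip(2)[of i j] strip(2)[of i "j+1"] collab[of i j] collab[of "i+1" j] by metis
qed

definition "yy = (\<lambda>(i,j). SOME t. goodB i j t)"

lemma yy_good: "goodB i j (yy (i,j))"
  unfolding yy_def using someI_ex[OF block[of i j]] by simp

lemma yy_in: "yy (i,j) \<in> T'set n" using yy_good unfolding goodB_def by auto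

lemma yy_valid: "valid_config (T'set n) yy"
  unfolding valid_config_def
proof (intro allI conjI)
  fix i j
  show "yy (i,j) \<in> T'set n" by (rule yy_in)
  have g1: "goodT n (yy (i,j))" "goodT n (yy (i+1,j))" "goodT n (yy (i,j+1))" using goodT_all yy_in n1 by auto
  show "RIGHT (yy (i, j)) = LEFT (yy (i + 1, j))"
    using yy_good[of i j] yy_good[of "i+1" j] g1 tau_inj[OF n1] unfolding goodB_def goodT_def by metis
  show "TOP (yy (i, j)) = BOTTOM (yy (i, j + 1))"
    using yy_good[of i j] yy_good[of i "j+1"] g1 tau_inj[OF n1] unfolding goodB_def goodT_def by metis
qed

lemma LBx_len: "length (LBx i j) = nat (wd i)" unfolding LBx_def by simp
lemma LLx_len: "length (LLx i j) = nat (ht j)" unfolding LLx_def by simp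

lemma yy_width: "tile_width n (yy (i,j)) = nat (wd i)"
  using yy_good[of i j] LBx_len unfolding goodB_def tile_width_def by simp
lemma yy_height: "tile_height n (yy (i,j)) = nat (ht j)"
  using yy_good[of i j] LLx_len unfolding goodB_def tile_height_def by simp

definition "PP i j = (\<lambda>(u::nat,v::nat). if u < nat (wd i) \<and> v < nat (ht j) then x (X i + int u, Y j + int v) else undefined)"

lemma PP_ok:
  fixes i j
  defines "w \<equiv> nat (wd i)" and "h \<equiv> nat (ht j)"
  shows "valid_pattern (T'set n) w h (PP i j)"
    and "right_labels w h (PP i j) = LLx (i+1) j"
    and "top_labels w h (PP i j) = LBx i (j+1)"
    and "left_labels h (PP i j) = LLx i j"
    and "bottom_labels w (PP i j) = LBx i j"
proof -
  have w1: "1 \<le> w" "int w = wd i" using wd_pos[of i] unfolding w_def by auto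
  have h1: "1 \<le> h" "int h = ht j" using ht_pos[of j] unfolding h_def by auto
  have "Bset n \<subseteq> B'set n" unfolding Bset_def B'set_def by auto
  moreover have "Jset n \<subseteq> J'set n" unfolding Jset_def by auto
  ultimately have TT: "Tset n \<subseteq> T'set n" unfolding Tset_def T'set_def by blast
  show "valid_pattern (T'set n) w h (PP i j)"
    unfolding valid_pattern_def PP_def w_def[symmetric] h_def[symmetric]
    using tin TT mR mT by (auto simp: ac_simps)
  have e1: "X i + int (w - 1) + 1 = X (i+1)" using w1 unfolding wd_def by auto
  have "right_labels w h (PP i j) = map (\<lambda>q. RIGHT (x (X i + int (w-1), Y j + int q))) [0..<h]"
    unfolding right_labels_def PP_def w_def[symmetric] h_def[symmetric] using w1 by simp
  also have "\<dots> = map (\<lambda>q. LEFT (x (X (i+1), Y j + int q))) [0..<h]"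
    using mR e1 by metis
  finally show "right_labels w h (PP i j) = LLx (i+1) j" unfolding LLx_def h_def .
  have e2: "Y j + int (h - 1) + 1 = Y (j+1)" using h1 unfolding ht_def by auto
  have "top_labels w h (PP i j) = map (\<lambda>p. TOP (x (X i + int p, Y j + int (h-1)))) [0..<w]"
    unfolding top_labels_def PP_def w_def[symmetric] h_def[symmetric] using h1 by simp
  also have "\<dots> = map (\<lambda>p. BOTTOM (x (X i + int p, Y (j+1)))) [0..<w]"
    using mT e2 by metis
  finally show "top_labels w h (PP i j) = LBx i (j+1)" unfolding LBx_def w_def .
  show "left_labels h (PP i j) = LLx i j"
    unfolding left_labels_def LLx_def PP_def w_def[symmetric] h_def[symmetric] using w1 by simp
  show "bottom_labels w (PP i j) = LBx i j"
    unfolding bottom_labels_def LBx_def PP_def w_def[symmetric] h_def[symmetric] using h1 by simp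
qed

lemma omega_yy: "omega_tile n (yy (i,j)) = PP i j"
proof -
  let ?w = "nat (wd i)" and ?h = "nat (ht j)"
  let ?Q = "\<lambda>p. valid_pattern (T'set n) ?w ?h p
    \<and> right_labels ?w ?h p = tau n (RIGHT (yy (i,j)))
    \<and> top_labels ?w ?h p = tau n (TOP (yy (i,j)))
    \<and> left_labels ?h p = tau n (LEFT (yy (i,j)))
    \<and> bottom_labels ?w p = tau n (BOTTOM (yy (i,j)))
    \<and> (\<forall>u v. \<not> (u < ?w \<and> v < ?h) \<longrightarrow> p (u, v) = undefined)"
  have g: "goodB i j (yy (i,j))" by (rule yy_good)
  have QP: "?Q (PP i j)" using PP_ok[where i=i and j=j] g unfolding goodB_def by (auto simp: PP_def)
  have un: "p = PP i j" if "?Q p" for p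
  proof
    fix uv :: "nat \<times> nat"
    obtain u v where uv: "uv = (u,v)" by (cases uv) auto
    show "p uv = PP i j uv"
    proof (cases "u < ?w \<and> v < ?h")
      case True
      have "p (u,v) = PP i j (u,v)"
      proof (rule pattern_unique[of "T'set n" ?w ?h p "PP i j"])
        show "\<And>t t'. t \<in> T'set n \<Longrightarrow> t' \<in> T'set n \<Longrightarrow> LEFT t = LEFT t' \<Longrightarrow> BOTTOM t = BOTTOM t' \<Longrightarrow> t = t'"
          using T'_det n1 by blast
      qed (use that QP True in auto)
      then show ?thesis using uv by simp
    next
      case False
      then show ?thesis using that QP uv by auto
    qed
  qed
  show ?thesis unfolding omega_tile_def yy_width yy_height
    by (rule the_equality[of ?Q, OF QP un]) simp
qed

lemma conf_eq: "omega_conf n yy (a - X 0, b - Y 0) = x (a,b)"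
proof -
  have Weq: "(\<lambda>m1. int (tile_width n (yy (m1, 0)))) = wd"
  proof
    fix m show "int (tile_width n (yy (m, 0))) = wd m" using wd_pos[of m] by (simp add: yy_width)
  qed
  have Heq: "(\<lambda>m2. int (tile_height n (yy (0, m2)))) = ht"
  proof
    fix m show "int (tile_height n (yy (0, m))) = ht m" using ht_pos[of m] by (simp add: yy_height)
  qed
  have offW: "off wd m = X m - X 0" for m by (rule off_eq) (simp add: wd_def)
  have offH: "off ht m = Y m - Y 0" for m by (rule off_eq) (simp add: ht_def)
  obtain i where i: "X i \<le> a" "a < X (i+1)" using find_idx[of X a] Xm by auto
  obtain j where j: "Y j \<le> b" "b < Y (j+1)" using find_idx[of Y b] Ym by auto
  have ti: "(THE m1. off wd m1 \<le> a - X 0 \<and> a - X 0 < off wd (m1 + 1)) = i"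
  proof (rule the_equality)
    show "off wd i \<le> a - X 0 \<and> a - X 0 < off wd (i + 1)" using i unfolding offW by auto
  next
    fix m assume "off wd m \<le> a - X 0 \<and> a - X 0 < off wd (m + 1)"
    then have "X m \<le> a" "a < X (m+1)" unfolding offW by auto
    then show "m = i" using idx_unique[of X m a i] Xm i by auto
  qed
  have tj: "(THE m2. off ht m2 \<le> b - Y 0 \<and> b - Y 0 < off ht (m2 + 1)) = j"
  proof (rule the_equality)
    show "off ht j \<le> b - Y 0 \<and> b - Y 0 < off ht (j + 1)" using j unfolding offH by auto
  next
    fix m assume "off ht m \<le> b - Y 0 \<and> b - Y 0 < off ht (m + 1)"
    then have "Y m \<le> b" "b < Y (m+1)" unfolding offH by auto
    then show "m = j" using idx_unique[of Y m b j] Ym j by auto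
  qed
  have "omega_conf n yy (a - X 0, b - Y 0) = omega_tile n (yy (i,j)) (nat (a - X 0 - off wd i), nat (b - Y 0 - off ht j))"
    unfolding omega_conf_def Let_def Weq Heq by (simp add: ti tj)
  also have "\<dots> = PP i j (nat (a - X i), nat (b - Y j))" unfolding omega_yy offW offH by simp
  also have "\<dots> = x (a,b)" using i j unfolding PP_def wd_def ht_def by auto
  finally show ?thesis .
qed

lemma main: "x = shift (- X 0, - Y 0) (omega_conf n yy)"
proof
  fix p :: "int \<times> int"
  obtain a b where p: "p = (a,b)" by (cases p) auto
  show "x p = shift (- X 0, - Y 0) (omega_conf n yy) p"
    unfolding p shift_def using conf_eq[of a b] by simp
qed

end

lemma hinc: assumes "t \<in> Tset n" "fst (BOTTOM t) \<noteq> 0"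
  shows "snd (snd (RIGHT t)) = snd (snd (LEFT t)) + 1 \<and> 0 \<le> snd (snd (LEFT t)) \<and> snd (snd (LEFT t)) \<le> int n"
proof (cases "fst (LEFT t) = 0")
  case True
  then show ?thesis using T_S[OF assms(1) True assms(2)] unfolding Sform_def by auto
next
  case False
  then show ?thesis using T_W[OF assms(1) False assms(2)] unfolding Wform_def by auto
qed

lemma gap: assumes v: "valid_config (Tset n) x"
  shows "\<exists>c. a < c \<and> c \<le> a + (int n + 2) \<and> fst (BOTTOM (x (c, 0))) = 0"
proof (rule ccontr)
  assume "\<not> ?thesis"
  then have nz: "fst (BOTTOM (x (c, 0))) \<noteq> 0" if "a < c" "c \<le> a + (int n + 2)" for c using that by auto
  have tin: "x p \<in> Tset n" for p using v unfolding valid_config_def by (cases p) auto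
  have mR: "RIGHT (x (c,0)) = LEFT (x (c+1,0))" for c using v unfolding valid_config_def by auto
  have ind: "snd (snd (LEFT (x (a + int p, 0)))) \<ge> int p - 1" if "1 \<le> p" "p \<le> n + 2" for p :: nat
    using that
  proof (induction p)
    case 0 then show ?case by simp
  next
    case (Suc p)
    show ?case
    proof (cases "p = 0")
      case True then show ?thesis using hinc[OF tin nz[of "a+1"]] by simp
    next
      case False
      then have h: "snd (snd (RIGHT (x (a + int p, 0)))) = snd (snd (LEFT (x (a + int p, 0)))) + 1"
        using hinc[OF tin nz[of "a + int p"]] Suc.prems by auto
      have "LEFT (x (a + int (Suc p), 0)) = RIGHT (x (a + int p, 0))" using mR[of "a + int p"] by (simp add: ac_simps)
      then show ?thesis using h Suc False by auto
    qed
  qed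
  have "snd (snd (LEFT (x (a + int (n+2), 0)))) \<le> int n" using hinc[OF tin nz[of "a + int (n+2)"]] by auto
  then show False using ind[of "n+2"] by auto
qed

theorem proposition6p9:
  fixes n :: nat
  assumes "1 \<le> n"
  shows "Omega n \<subseteq> {shift k (omega_conf n x) | k x. x \<in> Omega' n}"
proof
  fix x assume "x \<in> Omega n"
  then have v: "valid_config (Tset n) x" unfolding Omega_def by auto
  obtain X :: "int \<Rightarrow> int" where X: "\<forall>i. X i < X (i+1)" "\<forall>i. fst (BOTTOM (x (X i, 0))) = 0"
      "\<forall>a. fst (BOTTOM (x (a, 0))) = 0 \<longrightarrow> (\<exists>i. X i = a)"
    using enum_exists[where P="\<lambda>c. fst (BOTTOM (x (c, 0))) = 0" and d="int n + 2"] gap[OF v] by blast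
  have gt: "\<exists>c. a < c \<and> c \<le> a + (int n + 2) \<and> fst (LEFT (x (0, c))) = 0" for a
    using gap[OF tr_valid[OF v], of a] unfolding tr_def by simp
  obtain Y :: "int \<Rightarrow> int" where Y: "\<forall>i. Y i < Y (i+1)" "\<forall>i. fst (LEFT (x (0, Y i))) = 0"
      "\<forall>a. fst (LEFT (x (0, a))) = 0 \<longrightarrow> (\<exists>i. Y i = a)"
    using enum_exists[where P="\<lambda>c. fst (LEFT (x (0, c))) = 0" and d="int n + 2"] gt by blast
  interpret C: cfg n x X Y
    using assms v X Y by unfold_locales auto
  have "x = shift (- X 0, - Y 0) (omega_conf n C.yy)" by (rule C.main)
  moreover have "C.yy \<in> Omega' n" unfolding Omega'_def using C.yy_valid by auto
  ultimately show "x \<in> {shift k (omega_conf n x) | k x. x \<in> Omega' n}" by blast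
qed



end
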